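(* Let $U\in U(2)$ and $\epsilon>0$ be fixed. Then for every number of control qubits $n_c$, an approximate decomposition of the $n_c$-controlled gate $C^{n_c}U$ up to error $\epsilon$ can be constructed on $n=n_c+1$ qubits without auxiliary qubits using a number of CNOT gates that is linear in $n$ (i.e., $O(n)$, with the constant depending on $U$ and $\epsilon$ but not on $n$).
   Context: $C^{n_c}U$ denotes the $(n_c+1)$-qubit gate with control qubits $c_1,\dots,c_{n_c}$ and target qubit $t$ that applies $U$ to $t$ when all controls are in state $|1\rangle$ and the identity otherwise. An approximate decomposition up to error $\epsilon$ is a circuit of CNOT and single-qubit gates on these $n_c+1$ qubits such that, for each computational basis state $x$ of the controls, the operator $V_x$ applied to the target satisfies $\|V_x-U\|_{\max}\le\epsilon$ if $x=1\cdots1$ and $\|V_x-I\|_{\max}\le\epsilon$ otherwise, where $\|M\|_{\max}=\max_{i,j}|M_{ij}|$. *)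

theory Defs
  imports Complex_Main "Jordan_Normal_Form.Matrix"
begin

text \<open>Qubits are numbered 0,...,n-1. A computational basis state of n qubits is an
index i < 2^n; qubit k of i is the bit (i div 2^k) mod 2.\<close>

definition bit_of :: "nat \<Rightarrow> nat \<Rightarrow> nat" where
  "bit_of i k = (i div 2 ^ k) mod 2"

definition conj_transpose :: "complex mat \<Rightarrow> complex mat" where
  "conj_transpose A = mat (dim_col A) (dim_row A) (\<lambda>(i, j). cnj (A $$ (j, i)))"

definition unitary2 :: "complex mat \<Rightarrow> bool" where
  "unitary2 U \<longleftrightarrow> U \<in> carrier_mat 2 2 \<and> U * conj_transpose U = 1\<^sub>m 2"

datatype gate = Single nat "complex mat" | CNOT nat nat

fun gate_wf :: "nat \<Rightarrow> gate \<Rightarrow> bool" where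
  "gate_wf n (Single q G) \<longleftrightarrow> q < n \<and> unitary2 G"
| "gate_wf n (CNOT c t) \<longleftrightarrow> c < n \<and> t < n \<and> c \<noteq> t"

fun gate_mat :: "nat \<Rightarrow> gate \<Rightarrow> complex mat" where
  "gate_mat n (Single q G) = mat (2 ^ n) (2 ^ n) (\<lambda>(i, j).
      if (\<forall>k<n. k \<noteq> q \<longrightarrow> bit_of i k = bit_of j k)
      then G $$ (bit_of i q, bit_of j q) else 0)"
| "gate_mat n (CNOT c t) = mat (2 ^ n) (2 ^ n) (\<lambda>(i, j).
      if (\<forall>k<n. bit_of i k = (if k = t \<and> bit_of j c = 1 then 1 - bit_of j k else bit_of j k))
      then 1 else 0)"

text \<open>Circuit = list of gates applied left to right (first gate acts first).\<close>
fun circuit_mat :: "nat \<Rightarrow> gate list \<Rightarrow> complex mat" where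
  "circuit_mat n [] = 1\<^sub>m (2 ^ n)"
| "circuit_mat n (g # gs) = circuit_mat n gs * gate_mat n g"

definition circuit_wf :: "nat \<Rightarrow> gate list \<Rightarrow> bool" where
  "circuit_wf n gs \<longleftrightarrow> (\<forall>g\<in>set gs. gate_wf n g)"

definition is_CNOT :: "gate \<Rightarrow> bool" where
  "is_CNOT g \<longleftrightarrow> (case g of CNOT _ _ \<Rightarrow> True | _ \<Rightarrow> False)"

definition cnot_count :: "gate list \<Rightarrow> nat" where
  "cnot_count gs = length (filter is_CNOT gs)"

text \<open>Multi-controlled gate with controls 0..nc-1 and target nc (n = nc+1 qubits).
Control basis state x < 2^nc, target bit a; full index x + 2^nc * a.
The circuit must leave the controls unchanged, applying V_x to the target.\<close>
definition block :: "nat \<Rightarrow> complex mat \<Rightarrow> nat \<Rightarrow> complex mat" where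
  "block nc W x = mat 2 2 (\<lambda>(a, b). W $$ (x + 2 ^ nc * a, x + 2 ^ nc * b))"

definition max_norm_le :: "complex mat \<Rightarrow> complex mat \<Rightarrow> real \<Rightarrow> bool" where
  "max_norm_le A B e \<longleftrightarrow> (\<forall>a<2. \<forall>b<2. cmod (A $$ (a, b) - B $$ (a, b)) \<le> e)"

definition approx_decomp :: "nat \<Rightarrow> complex mat \<Rightarrow> real \<Rightarrow> gate list \<Rightarrow> bool" where
  "approx_decomp nc U e gs \<longleftrightarrow>
     circuit_wf (nc + 1) gs \<and>
     (let W = circuit_mat (nc + 1) gs in
       (\<forall>x<2 ^ nc. \<forall>y<2 ^ nc. \<forall>a<2. \<forall>b<2. y \<noteq> x \<longrightarrow>
           W $$ (y + 2 ^ nc * a, x + 2 ^ nc * b) = 0) \<and>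
       (\<forall>x<2 ^ nc. max_norm_le (block nc W x)
           (if x = 2 ^ nc - 1 then U else 1\<^sub>m 2) e))"

end

theory Submission
  imports Defs
begin


lemma bit_of_bit: "bit_of i k = (if bit i k then 1 else 0)"
  unfolding bit_of_def bit_nat_def by (simp add: odd_iff_mod_2_eq_one)

lemma lt_pow_bits: "(i::nat) < 2 ^ n \<Longrightarrow> bit i k \<Longrightarrow> k < n"
proof -
  assume "i < 2 ^ n" "bit i k"
  then have "take_bit n i = i" by (simp add: take_bit_nat_eq_self_iff)
  then have "bit (take_bit n i) k" using \<open>bit i k\<close> by simp
  then show "k < n" by (simp add: bit_take_bit_iff)
qed

lemma bits_lt_pow: "(\<And>k. bit (i::nat) k \<Longrightarrow> k < n) \<Longrightarrow> i < 2 ^ n"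
proof -
  assume h: "\<And>k. bit (i::nat) k \<Longrightarrow> k < n"
  have "take_bit n i = i" by (rule bit_eq_iff[THEN iffD2]) (auto simp: bit_take_bit_iff h)
  then show ?thesis by (metis take_bit_nat_less_exp)
qed

lemma eq_bits: "(i::nat) < 2 ^ n \<Longrightarrow> j < 2 ^ n \<Longrightarrow> (\<And>k. k < n \<Longrightarrow> bit i k = bit j k) \<Longrightarrow> i = j"
  by (rule bit_eq_iff[THEN iffD2]) (metis lt_pow_bits)

lemma flip_bit_lt: "(j::nat) < 2 ^ n \<Longrightarrow> t < n \<Longrightarrow> flip_bit t j < 2 ^ n"
  by (rule bits_lt_pow) (auto simp: bit_flip_bit_iff dest: lt_pow_bits split: if_splits)
lemma set_bit_lt: "(j::nat) < 2 ^ n \<Longrightarrow> t < n \<Longrightarrow> set_bit t j < 2 ^ n"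
  by (rule bits_lt_pow) (auto simp: bit_set_bit_iff dest: lt_pow_bits split: if_splits)
lemma unset_bit_lt: "(j::nat) < 2 ^ n \<Longrightarrow> unset_bit t j < 2 ^ n"
  by (rule bits_lt_pow) (auto simp: bit_unset_bit_iff dest: lt_pow_bits split: if_splits)

definition m2 :: "complex \<Rightarrow> complex \<Rightarrow> complex \<Rightarrow> complex \<Rightarrow> complex mat" where
  "m2 a b c d = mat 2 2 (\<lambda>(i,j). if i = 0 then (if j = 0 then a else b) else (if j = 0 then c else d))"

lemma m2_carrier[simp]: "m2 a b c d \<in> carrier_mat 2 2" by (simp add: m2_def)
lemma m2_dim[simp]: "dim_row (m2 a b c d) = 2" "dim_col (m2 a b c d) = 2" by (simp_all add: m2_def)
lemma m2_idx[simp]: "m2 a b c d $$ (0,0) = a" "m2 a b c d $$ (0,1) = b"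
   "m2 a b c d $$ (1,0) = c" "m2 a b c d $$ (1,1) = d"
   "m2 a b c d $$ (0,Suc 0) = b" "m2 a b c d $$ (Suc 0,0) = c" "m2 a b c d $$ (Suc 0,Suc 0) = d"
  by (simp_all add: m2_def)

lemma mult_carrier2[simp]: "A \<in> carrier_mat 2 2 \<Longrightarrow> B \<in> carrier_mat 2 2 \<Longrightarrow> A * B \<in> carrier_mat 2 2"
  by auto

lemma mat2_eqI: "A \<in> carrier_mat 2 2 \<Longrightarrow> B \<in> carrier_mat 2 2 \<Longrightarrow> A $$ (0,0) = B $$ (0,0) \<Longrightarrow>
  A $$ (0,1) = B $$ (0,1) \<Longrightarrow> A $$ (1,0) = B $$ (1,0) \<Longrightarrow> A $$ (1,1) = B $$ (1,1) \<Longrightarrow> A = B"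
  apply (rule eq_matI)
  apply (auto simp: less_2_cases_iff)
  done

lemma m2_eta: "A \<in> carrier_mat 2 2 \<Longrightarrow> A = m2 (A $$ (0,0)) (A $$ (0,1)) (A $$ (1,0)) (A $$ (1,1))"
  by (rule mat2_eqI) auto

lemma mult2_idx: "A \<in> carrier_mat 2 2 \<Longrightarrow> B \<in> carrier_mat 2 2 \<Longrightarrow> a < 2 \<Longrightarrow> b < 2 \<Longrightarrow>
   (A * B) $$ (a, b) = A $$ (a,0) * B $$ (0,b) + A $$ (a,1) * B $$ (1,b)"
  by (simp add: scalar_prod_def numeral_2_eq_2)

lemma m2_mult[simp]: "m2 a b c d * m2 a' b' c' d' = m2 (a*a' + b*c') (a*b' + b*d') (c*a' + d*c') (c*b' + d*d')"
  by (rule mat2_eqI) (simp_all del: index_mult_mat add: mult2_idx)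

lemma one2: "1\<^sub>m 2 = m2 1 0 0 1"
  by (rule mat2_eqI) auto


lemma eq_iff_bits: "(i::nat) < 2 ^ n \<Longrightarrow> j < 2 ^ n \<Longrightarrow> (i = j) = (\<forall>k<n. bit i k = bit j k)"
  using eq_bits by blast

definition ctrl :: "nat \<Rightarrow> nat \<Rightarrow> (nat \<Rightarrow> complex mat) \<Rightarrow> complex mat" where
  "ctrl n t F = mat (2^n) (2^n) (\<lambda>(i,j). if (\<forall>k<n. k \<noteq> t \<longrightarrow> bit i k = bit j k)
      then F (unset_bit t j) $$ (bit_of i t, bit_of j t) else 0)"

definition bperm :: "nat \<Rightarrow> (nat \<Rightarrow> nat) \<Rightarrow> complex mat" where
  "bperm n f = mat (2^n) (2^n) (\<lambda>(i,j). if i = f j then 1 else 0)"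

definition diagm :: "nat \<Rightarrow> (nat \<Rightarrow> complex) \<Rightarrow> complex mat" where
  "diagm n f = mat (2^n) (2^n) (\<lambda>(i,j). if i = j then f j else 0)"

lemma ctrl_carrier[simp]: "ctrl n t F \<in> carrier_mat (2^n) (2^n)"
  and bperm_carrier[simp]: "bperm n f \<in> carrier_mat (2^n) (2^n)"
  and diagm_carrier[simp]: "diagm n g \<in> carrier_mat (2^n) (2^n)"
  by (simp_all add: ctrl_def bperm_def diagm_def)

lemma ctrl_dim[simp]: "dim_row (ctrl n t F) = 2^n" "dim_col (ctrl n t F) = 2^n"
  and bperm_dim[simp]: "dim_row (bperm n f) = 2^n" "dim_col (bperm n f) = 2^n"
  and diagm_dim[simp]: "dim_row (diagm n g) = 2^n" "dim_col (diagm n g) = 2^n"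
  by (simp_all add: ctrl_def bperm_def diagm_def)

lemma gate_carrier[simp]: "gate_mat n g \<in> carrier_mat (2^n) (2^n)"
  by (cases g) auto

lemma circuit_carrier[simp]: "circuit_mat n gs \<in> carrier_mat (2^n) (2^n)"
  by (induction gs) auto

lemma circuit_append: "circuit_mat n (xs @ ys) = circuit_mat n ys * circuit_mat n xs"
proof (induction xs)
  case Nil
  then show ?case by (simp add: right_mult_one_mat[of _ "2^n"])
next
  case (Cons x xs)
  have "circuit_mat n ((x # xs) @ ys) = (circuit_mat n ys * circuit_mat n xs) * gate_mat n x"
    using Cons by simp
  also have "\<dots> = circuit_mat n ys * (circuit_mat n xs * gate_mat n x)"
    by (rule assoc_mult_mat[OF circuit_carrier circuit_carrier gate_carrier])
  finally show ?case by simp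
qed

lemma bit_of_eq_iff: "(bit_of i k = bit_of j k) = (bit i k = bit j k)"
  by (simp add: bit_of_bit)

lemma gate_single: "q < n \<Longrightarrow> gate_mat n (Single q G) = ctrl n q (\<lambda>_. G)"
  by (rule eq_matI) (simp_all add: ctrl_def bit_of_eq_iff)

lemma bit_of_lt[simp]: "bit_of i t < 2"
  by (simp add: bit_of_bit)

lemma agree_cases:
  assumes t: "t < n" and j: "(j::nat) < 2^n" and l: "l < 2^n"
    and ag: "\<forall>k<n. k \<noteq> t \<longrightarrow> bit l k = bit j k"
  shows "l = unset_bit t j \<or> l = set_bit t j"
proof (cases "bit l t")
  case True
  have "\<forall>k<n. bit l k = bit (set_bit t j) k"
    using ag True by (auto simp: bit_set_bit_iff)
  then have "l = set_bit t j" using eq_iff_bits[OF l set_bit_lt[OF j t]] by simp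
  then show ?thesis by simp
next
  case False
  have "\<forall>k<n. bit l k = bit (unset_bit t j) k"
    using ag False by (auto simp: bit_unset_bit_iff)
  then have "l = unset_bit t j" using eq_iff_bits[OF l unset_bit_lt[OF j]] by simp
  then show ?thesis by simp
qed

lemma unset_ne_set: "unset_bit t (j::nat) \<noteq> set_bit t j"
proof
  assume "unset_bit t j = set_bit t j"
  then have "bit (unset_bit t j) t = bit (set_bit t j) t" by simp
  then show False by (simp add: bit_unset_bit_iff bit_set_bit_iff)
qed

lemma sum_two:
  assumes t: "t < n" and j: "(j::nat) < 2^n"
    and h: "\<And>l. l < 2^n \<Longrightarrow> g l \<noteq> 0 \<Longrightarrow> (\<forall>k<n. k \<noteq> t \<longrightarrow> bit l k = bit j k)"
  shows "(\<Sum>l\<in>{0..<2^n}. g l) = g (unset_bit t j) + g (set_bit t j)"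
proof -
  let ?S = "{unset_bit t j, set_bit t j}"
  have sub: "?S \<subseteq> {0..<2^n}" using unset_bit_lt[OF j] set_bit_lt[OF j t] by simp
  have z: "\<forall>i\<in>{0..<2 ^ n} - ?S. g i = 0"
  proof
    fix l assume l: "l \<in> {0..<2 ^ n} - ?S"
    show "g l = 0"
    proof (rule ccontr)
      assume "g l \<noteq> 0"
      then have "\<forall>k<n. k \<noteq> t \<longrightarrow> bit l k = bit j k" using h l by simp
      moreover have "l < 2^n" using l by simp
      ultimately have "l = unset_bit t j \<or> l = set_bit t j" using agree_cases[OF t j] by blast
      then show False using l by simp
    qed
  qed
  have "(\<Sum>l\<in>{0..<2^n}. g l) = (\<Sum>l\<in>?S. g l)"
    by (rule sum.mono_neutral_right[OF _ sub z]) simp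
  also have "\<dots> = g (unset_bit t j) + g (set_bit t j)"
    using unset_ne_set[of t j] by simp
  finally show ?thesis .
qed

lemma unset_set[simp]: "unset_bit t (set_bit t (j::nat)) = unset_bit t j"
  and unset_unset[simp]: "unset_bit t (unset_bit t (j::nat)) = unset_bit t j"
  by (rule bit_eq_iff[THEN iffD2]; auto simp: bit_unset_bit_iff bit_set_bit_iff)+

lemma ctrl_idx: "i < 2^n \<Longrightarrow> j < 2^n \<Longrightarrow> ctrl n t F $$ (i,j) =
  (if (\<forall>k<n. k \<noteq> t \<longrightarrow> bit i k = bit j k) then F (unset_bit t j) $$ (bit_of i t, bit_of j t) else 0)"
  by (simp add: ctrl_def)

lemma ctrl_mult:
  assumes t: "t < n" and F: "\<And>j. F j \<in> carrier_mat 2 2" and G: "\<And>j. G j \<in> carrier_mat 2 2"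
  shows "ctrl n t F * ctrl n t G = ctrl n t (\<lambda>j. F j * G j)"
proof (rule eq_matI)
  fix i j assume i: "i < dim_row (ctrl n t (\<lambda>j. F j * G j))" and j: "j < dim_col (ctrl n t (\<lambda>j. F j * G j))"
  then have i: "i < 2^n" and j: "j < 2^n" by auto
  let ?g = "\<lambda>l. ctrl n t F $$ (i, l) * ctrl n t G $$ (l, j)"
  have "(ctrl n t F * ctrl n t G) $$ (i,j) = (\<Sum>l\<in>{0..<2^n}. ?g l)"
    using i j by (simp add: scalar_prod_def)
  also have "\<dots> = ?g (unset_bit t j) + ?g (set_bit t j)"
  proof (rule sum_two[OF t j])
    fix l assume "l < 2^n" "?g l \<noteq> 0"
    then show "\<forall>k<n. k \<noteq> t \<longrightarrow> bit l k = bit j k"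
      using j by (auto simp: ctrl_idx split: if_splits)
  qed
  also have "\<dots> = ctrl n t (\<lambda>j. F j * G j) $$ (i,j)"
  proof -
    have u: "unset_bit t j < 2^n" "set_bit t j < 2^n" using t j by (auto simp: unset_bit_lt set_bit_lt)
    have a1: "(\<forall>k<n. k \<noteq> t \<longrightarrow> bit i k = bit (unset_bit t j) k) = (\<forall>k<n. k \<noteq> t \<longrightarrow> bit i k = bit j k)"
      by (auto simp: bit_unset_bit_iff)
    have a2: "(\<forall>k<n. k \<noteq> t \<longrightarrow> bit i k = bit (set_bit t j) k) = (\<forall>k<n. k \<noteq> t \<longrightarrow> bit i k = bit j k)"
      by (auto simp: bit_set_bit_iff)
    have a3: "(\<forall>k<n. k \<noteq> t \<longrightarrow> bit (unset_bit t j) k = bit j k)"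
      "(\<forall>k<n. k \<noteq> t \<longrightarrow> bit (set_bit t j) k = bit j k)"
      by (auto simp: bit_unset_bit_iff bit_set_bit_iff)
    have b: "bit_of (unset_bit t j) t = 0" "bit_of (set_bit t j) t = 1"
      by (auto simp: bit_of_bit bit_unset_bit_iff bit_set_bit_iff)
    show ?thesis
    proof (cases "\<forall>k<n. k \<noteq> t \<longrightarrow> bit i k = bit j k")
      case True
      then show ?thesis using i j u a1 a2 a3 b by (simp add: ctrl_idx mult2_idx[OF F G])
    next
      case False
      then show ?thesis using i j u a1 a2 a3 b by (simp only: ctrl_idx if_False a1 a2) simp
    qed
  qed
  finally show "(ctrl n t F * ctrl n t G) $$ (i,j) = ctrl n t (\<lambda>j. F j * G j) $$ (i,j)" .
qed auto

lemma bperm_mult: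
  assumes g: "\<And>j. j < 2^n \<Longrightarrow> g j < 2^n"
  shows "bperm n f * bperm n g = bperm n (\<lambda>j. f (g j))"
proof (rule eq_matI)
  fix i j assume "i < dim_row (bperm n (\<lambda>j. f (g j)))" "j < dim_col (bperm n (\<lambda>j. f (g j)))"
  then have i: "i < 2^n" and j: "j < 2^n" by auto
  have "(bperm n f * bperm n g) $$ (i,j) = (\<Sum>l\<in>{0..<2^n}. (if i = f l then 1 else 0) * (if l = g j then 1 else 0))"
    using i j by (simp add: scalar_prod_def bperm_def)
  also have "\<dots> = (\<Sum>l\<in>{0..<2^n}. if l = g j then (if i = f l then 1 else 0) else 0)"
    by (rule sum.cong) auto
  also have "\<dots> = (if i = f (g j) then 1 else 0)"
    using g[OF j] by (simp add: sum.delta')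
  finally show "(bperm n f * bperm n g) $$ (i,j) = bperm n (\<lambda>j. f (g j)) $$ (i,j)"
    using i j by (simp add: bperm_def)
qed auto

lemma cnot_cond:
  "(bit_of i k = (if k = t \<and> bit_of j c = 1 then 1 - bit_of j k else bit_of j k))
   = (bit i k = bit (if bit j c then flip_bit t j else j) k)"
proof (cases "bit j c")
  case True
  then show ?thesis by (cases "k = t") (auto simp: bit_of_bit bit_flip_bit_iff)
next
  case False
  then show ?thesis by (simp add: bit_of_bit)
qed

lemma gate_cnot:
  assumes "c < n" "t < n" "c \<noteq> t"
  shows "gate_mat n (CNOT c t) = bperm n (\<lambda>j. if bit j c then flip_bit t j else j)"
proof (rule eq_matI)
  fix i j assume "i < dim_row (bperm n (\<lambda>j. if bit j c then flip_bit t j else j))"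
    "j < dim_col (bperm n (\<lambda>j. if bit j c then flip_bit t j else j))"
  then have i: "i < 2^n" and j: "j < 2^n" by auto
  define f where "f = (if bit j c then flip_bit t j else j)"
  have f: "f < 2^n" using j assms by (auto simp: flip_bit_lt f_def)
  have e: "gate_mat n (CNOT c t) $$ (i, j) =
    (if (\<forall>k<n. bit_of i k = (if k = t \<and> bit_of j c = 1 then 1 - bit_of j k else bit_of j k)) then 1 else 0)"
    using i j by simp
  have "(\<forall>k<n. bit_of i k = (if k = t \<and> bit_of j c = 1 then 1 - bit_of j k else bit_of j k))
      = (\<forall>k<n. bit i k = bit f k)"
    unfolding f_def cnot_cond ..
  also have "\<dots> = (i = f)" using eq_iff_bits[OF i f] by simp
  finally have "gate_mat n (CNOT c t) $$ (i, j) = (if i = f then 1 else 0)" using e by simp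
  then show "gate_mat n (CNOT c t) $$ (i, j) = bperm n (\<lambda>j. if bit j c then flip_bit t j else j) $$ (i, j)"
    using i j by (simp add: bperm_def f_def)
qed auto

definition Xm :: "complex mat" where "Xm = m2 0 1 1 0"

lemma bperm_ctrl:
  assumes t: "t < n" and P: "\<And>j. P (unset_bit t j) = P j"
  shows "bperm n (\<lambda>j. if P j then flip_bit t j else j) = ctrl n t (\<lambda>j. if P j then Xm else m2 1 0 0 1)"
proof (rule eq_matI)
  fix i j assume "i < dim_row (ctrl n t (\<lambda>j. if P j then Xm else m2 1 0 0 1))"
    "j < dim_col (ctrl n t (\<lambda>j. if P j then Xm else m2 1 0 0 1))"
  then have i: "i < 2^n" and j: "j < 2^n" by auto
  show "bperm n (\<lambda>j. if P j then flip_bit t j else j) $$ (i, j) =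
        ctrl n t (\<lambda>j. if P j then Xm else m2 1 0 0 1) $$ (i, j)"
  proof (cases "P j")
    case True
    have f: "flip_bit t j < 2^n" using j t by (simp add: flip_bit_lt)
    have "(i = flip_bit t j) = (\<forall>k<n. bit i k = bit (flip_bit t j) k)" using eq_iff_bits[OF i f] .
    also have "\<dots> = ((\<forall>k<n. k \<noteq> t \<longrightarrow> bit i k = bit j k) \<and> bit i t \<noteq> bit j t)"
      using t by (auto simp: bit_flip_bit_iff)
    finally show ?thesis using True i j P[of j]
      by (auto simp: bperm_def ctrl_idx Xm_def m2_def bit_of_bit)
  next
    case False
    have "(i = j) = (\<forall>k<n. bit i k = bit j k)" using eq_iff_bits[OF i j] .
    also have "\<dots> = ((\<forall>k<n. k \<noteq> t \<longrightarrow> bit i k = bit j k) \<and> bit i t = bit j t)"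
      using t by auto
    finally show ?thesis using False i j P[of j]
      by (auto simp: bperm_def ctrl_idx m2_def bit_of_bit)
  qed
qed auto

lemma ctrl_diag:
  assumes t: "t < n"
  shows "ctrl n t (\<lambda>j. m2 (p j) 0 0 (q j)) = diagm n (\<lambda>j. if bit j t then q (unset_bit t j) else p (unset_bit t j))"
proof (rule eq_matI)
  fix i j assume "i < dim_row (diagm n (\<lambda>j. if bit j t then q (unset_bit t j) else p (unset_bit t j)))"
    "j < dim_col (diagm n (\<lambda>j. if bit j t then q (unset_bit t j) else p (unset_bit t j)))"
  then have i: "i < 2^n" and j: "j < 2^n" by auto
  have "(i = j) = (\<forall>k<n. bit i k = bit j k)" using eq_iff_bits[OF i j] .
  also have "\<dots> = ((\<forall>k<n. k \<noteq> t \<longrightarrow> bit i k = bit j k) \<and> bit i t = bit j t)"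
    using t by auto
  finally show "ctrl n t (\<lambda>j. m2 (p j) 0 0 (q j)) $$ (i, j) =
    diagm n (\<lambda>j. if bit j t then q (unset_bit t j) else p (unset_bit t j)) $$ (i, j)"
    using i j by (auto simp: diagm_def ctrl_idx m2_def bit_of_bit)
qed auto

lemma set_unset_bit_id: "bit (j::nat) t \<Longrightarrow> set_bit t (unset_bit t j) = j"
  by (rule bit_eq_iff[THEN iffD2]) (auto simp: bit_unset_bit_iff bit_set_bit_iff)
lemma unset_bit_id: "\<not> bit (j::nat) t \<Longrightarrow> unset_bit t j = j"
  by (rule bit_eq_iff[THEN iffD2]) (auto simp: bit_unset_bit_iff)

lemma diag_ctrl:
  assumes t: "t < n"
  shows "diagm n f = ctrl n t (\<lambda>j. m2 (f (unset_bit t j)) 0 0 (f (set_bit t j)))"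
proof -
  have "ctrl n t (\<lambda>j. m2 (f (unset_bit t j)) 0 0 (f (set_bit t j))) =
      diagm n (\<lambda>j. if bit j t then f (set_bit t (unset_bit t j)) else f (unset_bit t (unset_bit t j)))"
    by (rule ctrl_diag[OF t])
  also have "(\<lambda>j. if bit j t then f (set_bit t (unset_bit t j)) else f (unset_bit t (unset_bit t j))) = f"
    by (auto simp: set_unset_bit_id unset_bit_id)
  finally show ?thesis by simp
qed

lemma diagm_mult: "diagm n f * diagm n g = diagm n (\<lambda>j. f j * g j)"
proof (rule eq_matI)
  fix i j assume "i < dim_row (diagm n (\<lambda>j. f j * g j))" "j < dim_col (diagm n (\<lambda>j. f j * g j))"
  then have i: "i < 2^n" and j: "j < 2^n" by auto
  have "(diagm n f * diagm n g) $$ (i,j) = (\<Sum>l\<in>{0..<2^n}. (if i = l then f l else 0) * (if l = j then g j else 0))"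
    using i j by (simp add: scalar_prod_def diagm_def)
  also have "\<dots> = (\<Sum>l\<in>{0..<2^n}. if l = j then (if i = l then f l * g j else 0) else 0)"
    by (rule sum.cong) auto
  also have "\<dots> = (if i = j then f j * g j else 0)"
    using j by (simp add: sum.delta')
  finally show "(diagm n f * diagm n g) $$ (i,j) = diagm n (\<lambda>j. f j * g j) $$ (i,j)"
    using i j by (simp add: diagm_def)
qed auto


declare gate_mat.simps[simp del]

lemma one_m2_mult[simp]: "A \<in> carrier_mat 2 2 \<Longrightarrow> m2 1 0 0 1 * A = A"
  by (simp add: one2[symmetric])
lemma m2_one_mult[simp]: "A \<in> carrier_mat 2 2 \<Longrightarrow> A * m2 1 0 0 1 = A"
  by (simp add: one2[symmetric])

lemma ctrl_one: "t < n \<Longrightarrow> 1\<^sub>m (2^n) = ctrl n t (\<lambda>_. m2 1 0 0 1)"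
proof -
  assume t: "t < n"
  have "ctrl n t (\<lambda>_. m2 1 0 0 1) = diagm n (\<lambda>j. 1)"
    using ctrl_diag[OF t, of "\<lambda>_. 1" "\<lambda>_. 1"] by simp
  also have "\<dots> = 1\<^sub>m (2^n)" by (rule eq_matI) (auto simp: diagm_def)
  finally show ?thesis by simp
qed

lemma circuit_cons_ctrl: "circuit_mat n gs = ctrl n t F \<Longrightarrow> gate_mat n g = ctrl n t G \<Longrightarrow> t < n \<Longrightarrow>
   (\<And>j. F j \<in> carrier_mat 2 2) \<Longrightarrow> (\<And>j. G j \<in> carrier_mat 2 2) \<Longrightarrow>
   circuit_mat n (g # gs) = ctrl n t (\<lambda>j. F j * G j)"
  by (simp add: ctrl_mult)

lemma cnot_ctrl: "c < n \<Longrightarrow> t < n \<Longrightarrow> c \<noteq> t \<Longrightarrow>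
   gate_mat n (CNOT c t) = ctrl n t (\<lambda>j. if bit j c then Xm else m2 1 0 0 1)"
  by (simp del: gate_mat.simps add: gate_cnot bperm_ctrl bit_unset_bit_iff)

lemma single_diag_ctrl: assumes "q < n" "t < n" "q \<noteq> t"
  shows "gate_mat n (Single q (m2 p 0 0 r)) = ctrl n t (\<lambda>j. if bit j q then m2 r 0 0 r else m2 p 0 0 p)"
proof -
  have "gate_mat n (Single q (m2 p 0 0 r)) = ctrl n q (\<lambda>_. m2 p 0 0 r)" using assms by (simp del: gate_mat.simps add: gate_single)
  also have "\<dots> = diagm n (\<lambda>j. if bit j q then r else p)" using ctrl_diag[OF assms(1), of "\<lambda>_. p" "\<lambda>_. r"] by simp
  also have "\<dots> = ctrl n t (\<lambda>j. m2 (if bit (unset_bit t j) q then r else p) 0 0 (if bit (set_bit t j) q then r else p))"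
    by (rule diag_ctrl[OF assms(2)])
  also have "\<dots> = ctrl n t (\<lambda>j. if bit j q then m2 r 0 0 r else m2 p 0 0 p)"
    using assms(3) by (intro arg_cong[where f="ctrl n t"] ext) (simp add: bit_unset_bit_iff bit_set_bit_iff)
  finally show ?thesis .
qed

definition omg :: complex where "omg = cis (pi/4)"
definition Tg :: "complex mat" where "Tg = m2 1 0 0 (cis (pi/4))"
definition Tdg :: "complex mat" where "Tdg = m2 1 0 0 (cis (-(pi/4)))"
definition hh :: complex where "hh = complex_of_real (1 / sqrt 2)"
definition Hg :: "complex mat" where "Hg = m2 hh hh hh (-hh)"

lemma gate_carriers[simp]: "Tg \<in> carrier_mat 2 2" "Tdg \<in> carrier_mat 2 2" "Hg \<in> carrier_mat 2 2" "Xm \<in> carrier_mat 2 2"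
  by (simp_all add: Tg_def Tdg_def Hg_def Xm_def)

lemma hh_sq: "hh * hh = 1/2"
proof -
  have "hh * hh = complex_of_real ((1 / sqrt 2) * (1 / sqrt 2))" by (simp only: hh_def of_real_mult)
  also have "(1 / sqrt 2) * (1 / sqrt 2) = (1/2::real)" by (simp add: real_sqrt_mult[symmetric])
  finally show ?thesis by simp
qed

definition toff_gates :: "nat \<Rightarrow> nat \<Rightarrow> nat \<Rightarrow> gate list" where
  "toff_gates a b c =
     [Single c Hg] @
     [CNOT b c, Single c Tdg, CNOT a c, Single c Tg, CNOT b c, Single c Tdg, CNOT a c, Single c Tg] @
     [Single b Tg, CNOT a b, Single a Tg, Single b Tdg, CNOT a b] @
     [Single c Hg]"

lemma cnot_count_toff: "cnot_count (toff_gates a b c) = 6"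
  by (simp add: toff_gates_def cnot_count_def is_CNOT_def)

lemma cis_facts: "cis (pi/4) * cis (pi/4) = \<i>" "cis (-(pi/4)) * cis (-(pi/4)) = - \<i>"
  "cis (pi/4) * cis (-(pi/4)) = 1" "cis (-(pi/4)) * cis (pi/4) = 1"
  by (simp_all add: cis_mult)

lemma toff_c_part:
  assumes "a < n" "b < n" "c < n" "a \<noteq> b" "a \<noteq> c" "b \<noteq> c"
  shows "circuit_mat n [CNOT b c, Single c Tdg, CNOT a c, Single c Tg, CNOT b c, Single c Tdg, CNOT a c, Single c Tg]
     = ctrl n c (\<lambda>j. if bit j a \<and> bit j b then m2 (-\<i>) 0 0 \<i> else m2 1 0 0 1)"
proof -
  have "circuit_mat n [CNOT b c, Single c Tdg, CNOT a c, Single c Tg, CNOT b c, Single c Tdg, CNOT a c, Single c Tg]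
    = ctrl n c (\<lambda>j. m2 1 0 0 1 * Tg * (if bit j a then Xm else m2 1 0 0 1) * Tdg * (if bit j b then Xm else m2 1 0 0 1)
        * Tg * (if bit j a then Xm else m2 1 0 0 1) * Tdg * (if bit j b then Xm else m2 1 0 0 1))"
    using assms
    by (simp del: gate_mat.simps add: ctrl_one[of c n] cnot_ctrl gate_single ctrl_mult)
  also have "\<dots> = ctrl n c (\<lambda>j. if bit j a \<and> bit j b then m2 (-\<i>) 0 0 \<i> else m2 1 0 0 1)"
    by (rule arg_cong[where f="ctrl n c"], rule ext)
       (auto simp: Tg_def Tdg_def Xm_def cis_facts mult.assoc)
  finally show ?thesis .
qed


lemma toff_ab_part:
  assumes "a < n" "b < n" "c < n" "a \<noteq> b" "a \<noteq> c" "b \<noteq> c"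
  shows "circuit_mat n [Single b Tg, CNOT a b, Single a Tg, Single b Tdg, CNOT a b]
     = ctrl n c (\<lambda>j. if bit j a \<and> bit j b then m2 \<i> 0 0 \<i> else m2 1 0 0 1)"
proof -
  have g1: "gate_mat n (Single b Tg) = ctrl n b (\<lambda>_. Tg)" "gate_mat n (Single b Tdg) = ctrl n b (\<lambda>_. Tdg)"
    using assms by (simp_all del: gate_mat.simps add: gate_single)
  have g3: "gate_mat n (Single a Tg) = ctrl n b (\<lambda>j. if bit j a then m2 (cis (pi/4)) 0 0 (cis (pi/4)) else m2 1 0 0 1)"
    using single_diag_ctrl[of a n b 1 "cis (pi/4)"] assms by (simp add: Tg_def)
  have g2: "gate_mat n (CNOT a b) = ctrl n b (\<lambda>j. if bit j a then Xm else m2 1 0 0 1)"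
    using assms by (simp add: cnot_ctrl)
  have "circuit_mat n [Single b Tg, CNOT a b, Single a Tg, Single b Tdg, CNOT a b]
    = ctrl n b (\<lambda>j. m2 1 0 0 1 * (if bit j a then Xm else m2 1 0 0 1) * Tdg *
         (if bit j a then m2 (cis (pi/4)) 0 0 (cis (pi/4)) else m2 1 0 0 1) * (if bit j a then Xm else m2 1 0 0 1) * Tg)"
    using assms
    by (simp del: gate_mat.simps add: ctrl_one[of b n] g1 g2 g3 ctrl_mult)
  also have "\<dots> = ctrl n b (\<lambda>j. m2 1 0 0 (if bit j a then \<i> else 1))"
    by (rule arg_cong[where f="ctrl n b"], rule ext)
       (auto simp: Tg_def Tdg_def Xm_def cis_facts mult.assoc)
  also have "\<dots> = diagm n (\<lambda>j. if bit j b then (if bit (unset_bit b j) a then \<i> else 1) else 1)"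
    using ctrl_diag[OF assms(2), of "\<lambda>_. 1" "\<lambda>j. if bit j a then \<i> else 1"] by simp
  also have "\<dots> = diagm n (\<lambda>j. if bit j a \<and> bit j b then \<i> else 1)"
    using assms by (intro arg_cong[where f="diagm n"] ext) (simp add: bit_unset_bit_iff)
  also have "\<dots> = ctrl n c (\<lambda>j. m2 (if bit (unset_bit c j) a \<and> bit (unset_bit c j) b then \<i> else 1) 0 0
         (if bit (set_bit c j) a \<and> bit (set_bit c j) b then \<i> else 1))"
    by (rule diag_ctrl[OF assms(3)])
  also have "\<dots> = ctrl n c (\<lambda>j. if bit j a \<and> bit j b then m2 \<i> 0 0 \<i> else m2 1 0 0 1)"
    using assms by (intro arg_cong[where f="ctrl n c"] ext) (simp add: bit_unset_bit_iff bit_set_bit_iff)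
  finally show ?thesis .
qed

lemma toffoli:
  assumes "a < n" "b < n" "c < n" "a \<noteq> b" "a \<noteq> c" "b \<noteq> c"
  shows "circuit_mat n (toff_gates a b c) = bperm n (\<lambda>j. if bit j a \<and> bit j b then flip_bit c j else j)"
proof -
  let ?L1 = "[Single c Hg]"
  let ?L2 = "[CNOT b c, Single c Tdg, CNOT a c, Single c Tg, CNOT b c, Single c Tdg, CNOT a c, Single c Tg]"
  let ?L3 = "[Single b Tg, CNOT a b, Single a Tg, Single b Tdg, CNOT a b]"
  have h: "circuit_mat n ?L1 = ctrl n c (\<lambda>_. Hg)"
    using assms by (simp del: gate_mat.simps add: gate_single ctrl_one[of c n] ctrl_mult)
  have "circuit_mat n (toff_gates a b c) =
     ((circuit_mat n ?L1 * circuit_mat n ?L3) * circuit_mat n ?L2) * circuit_mat n ?L1"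
    unfolding toff_gates_def circuit_append by simp
  also have "\<dots> = ctrl n c (\<lambda>j. Hg * (if bit j a \<and> bit j b then m2 \<i> 0 0 \<i> else m2 1 0 0 1)
       * (if bit j a \<and> bit j b then m2 (-\<i>) 0 0 \<i> else m2 1 0 0 1) * Hg)"
    unfolding h toff_ab_part[OF assms] toff_c_part[OF assms]
    using assms by (simp add: ctrl_mult)
  also have "\<dots> = ctrl n c (\<lambda>j. if bit j a \<and> bit j b then Xm else m2 1 0 0 1)"
    by (rule arg_cong[where f="ctrl n c"], rule ext)
       (auto simp: Hg_def Xm_def hh_sq algebra_simps)
  also have "\<dots> = bperm n (\<lambda>j. if bit j a \<and> bit j b then flip_bit c j else j)"
    using assms by (intro bperm_ctrl[symmetric]) (simp_all add: bit_unset_bit_iff)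
  finally show ?thesis .
qed


definition tf :: "(nat \<Rightarrow> nat) \<Rightarrow> (nat \<Rightarrow> nat) \<Rightarrow> nat \<Rightarrow> nat \<Rightarrow> nat" where
  "tf L cc i j = (if bit j (cc i) \<and> bit j (L (i - 1)) then flip_bit (L i) j else j)"

fun lad :: "(nat \<Rightarrow> nat) \<Rightarrow> (nat \<Rightarrow> nat) \<Rightarrow> nat \<Rightarrow> gate list" where
  "lad L cc 0 = []"
| "lad L cc (Suc 0) = toff_gates (cc 1) (L 0) (L 1)"
| "lad L cc (Suc (Suc i)) = toff_gates (cc (Suc (Suc i))) (L (Suc i)) (L (Suc (Suc i))) @ lad L cc (Suc i) @ toff_gates (cc (Suc (Suc i))) (L (Suc i)) (L (Suc (Suc i)))"

fun vf :: "(nat \<Rightarrow> nat) \<Rightarrow> (nat \<Rightarrow> nat) \<Rightarrow> nat \<Rightarrow> nat \<Rightarrow> nat" where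
  "vf L cc 0 j = j"
| "vf L cc (Suc 0) j = tf L cc 1 j"
| "vf L cc (Suc (Suc i)) j = tf L cc (Suc (Suc i)) (vf L cc (Suc i) (tf L cc (Suc (Suc i)) j))"

definition ladok :: "nat \<Rightarrow> (nat \<Rightarrow> nat) \<Rightarrow> (nat \<Rightarrow> nat) \<Rightarrow> nat \<Rightarrow> bool" where
  "ladok n L cc J \<longleftrightarrow> (\<forall>i\<le>J. L i < n \<and> cc i < n) \<and> cc 0 = L 0 \<and>
     (\<forall>i\<le>J. \<forall>i'\<le>J. L i = L i' \<longrightarrow> i = i') \<and>
     (\<forall>i\<le>J. \<forall>i'\<le>J. cc i = cc i' \<longrightarrow> i = i') \<and>
     (\<forall>i\<le>J. \<forall>l\<le>J. 1 \<le> i \<longrightarrow> L i \<noteq> cc l)"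

lemma ladok_mono: "ladok n L cc J \<Longrightarrow> J' \<le> J \<Longrightarrow> ladok n L cc J'"
  unfolding ladok_def by auto

lemma tf_lt: "ladok n L cc J \<Longrightarrow> i \<le> J \<Longrightarrow> j < 2^n \<Longrightarrow> tf L cc i j < 2^n"
  unfolding tf_def ladok_def by (auto simp: flip_bit_lt)

lemma vf_lt: "ladok n L cc J \<Longrightarrow> j < 2^n \<Longrightarrow> vf L cc J j < 2^n"
proof (induction L cc J j rule: vf.induct)
  case (1 L cc j) then show ?case by simp
next
  case (2 L cc j) then show ?case by (simp add: tf_lt)
next
  case (3 L cc i j)
  have ok: "ladok n L cc (Suc i)" using 3(2) ladok_mono by fastforce
  show ?case using 3 ok tf_lt[OF 3(2)] by simp
qed

lemma tf_circuit: assumes ok: "ladok n L cc J" and i: "1 \<le> i" "i \<le> J"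
  shows "circuit_mat n (toff_gates (cc i) (L (i-1)) (L i)) = bperm n (tf L cc i)"
proof -
  have lt: "cc i < n" "L (i-1) < n" "L i < n" using ok i unfolding ladok_def by auto
  have d1: "cc i \<noteq> L (i-1)"
  proof (cases "i - 1 = 0")
    case True
    then have "L (i-1) = cc 0" using ok unfolding ladok_def by simp
    moreover have "cc i \<noteq> cc 0" using ok i unfolding ladok_def by (metis le0 not_one_le_zero)
    ultimately show ?thesis by simp
  next
    case False
    then have "1 \<le> i - 1" "i - 1 \<le> J" using i by auto
    then have "\<forall>l\<le>J. L (i-1) \<noteq> cc l" using ok unfolding ladok_def by blast
    then show ?thesis using i by auto
  qed
  have d2: "cc i \<noteq> L i" using ok i unfolding ladok_def by (metis order_refl)
  have d3: "L (i-1) \<noteq> L i" using ok i unfolding ladok_def by (metis diff_le_self diff_less less_le_trans not_le zero_less_one le_numeral_extra(2) less_one)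
  show ?thesis unfolding tf_def using toffoli[OF lt d1 d2 d3] by simp
qed


lemma bperm_id: "bperm n (\<lambda>j. j) = 1\<^sub>m (2^n)"
  by (rule eq_matI) (auto simp: bperm_def)

lemma lad_circuit: "ladok n L cc J \<Longrightarrow> circuit_mat n (lad L cc J) = bperm n (vf L cc J)"
proof (induction L cc J rule: lad.induct)
  case (1 L cc)
  then show ?case by (simp add: bperm_id)
next
  case (2 L cc)
  then show ?case using tf_circuit[OF 2, of 1] by simp
next
  case (3 L cc i)
  have ok: "ladok n L cc (Suc i)" using 3(2) ladok_mono by fastforce
  have t: "circuit_mat n (toff_gates (cc (Suc (Suc i))) (L (Suc i)) (L (Suc (Suc i)))) = bperm n (tf L cc (Suc (Suc i)))"
    using tf_circuit[OF 3(2), of "Suc (Suc i)"] by simp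
  have "circuit_mat n (lad L cc (Suc (Suc i))) =
      (bperm n (tf L cc (i+2)) * bperm n (vf L cc (Suc i))) * bperm n (tf L cc (i+2))"
    by (simp add: circuit_append t 3(1)[OF ok])
  also have "\<dots> = bperm n (vf L cc (Suc (Suc i)))"
  proof -
    have e: "(\<lambda>j. tf L cc (Suc (Suc i)) (vf L cc (Suc i) (tf L cc (Suc (Suc i)) j))) = vf L cc (Suc (Suc i))"
      by (rule ext) simp
    show ?thesis
      using tf_lt[OF 3(2), of "Suc (Suc i)"] vf_lt[OF ok]
      by (simp add: bperm_mult e)
  qed
  finally show ?case .
qed

lemma tf_bit: "bit (tf L cc i j) k = (bit j k \<noteq> (k = L i \<and> bit j (cc i) \<and> bit j (L (i - 1))))"
  by (auto simp: tf_def bit_flip_bit_iff)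

definition AA :: "(nat \<Rightarrow> nat) \<Rightarrow> nat \<Rightarrow> nat \<Rightarrow> bool" where
  "AA cc i j \<longleftrightarrow> (\<forall>l\<le>i. bit j (cc l))"

lemma vf_bits: "ladok n L cc J \<Longrightarrow>
   bit (vf L cc J j) k = (bit j k \<noteq> (\<exists>i. 1 \<le> i \<and> i \<le> J \<and> k = L i \<and> AA cc i j))"
proof (induction L cc J j arbitrary: k rule: vf.induct)
  case (1 L cc j)
  then show ?case by simp
next
  case (2 L cc j)
  have "cc 0 = L 0" using 2 unfolding ladok_def by simp
  then have "(\<exists>i. 1 \<le> i \<and> i \<le> Suc 0 \<and> k = L i \<and> AA cc i j) = (k = L 1 \<and> bit j (cc 1) \<and> bit j (L 0))"
    unfolding AA_def by (auto simp: le_Suc_eq le_Suc_eq[of _ 0]) (metis le_Suc_eq le_zero_eq One_nat_def)+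
  then show ?case by (simp add: tf_bit)
next
  case (3 L cc i j)
  define J where "J = Suc i"
  have ok: "ladok n L cc J" using 3(2) ladok_mono J_def by fastforce
  have okJ: "ladok n L cc (Suc J)" using 3(2) J_def by simp
  let ?t = "tf L cc (Suc J)"
  define j1 where "j1 = ?t j"
  have IH: "\<And>k. bit (vf L cc J j1) k = (bit j1 k \<noteq> (\<exists>i'. 1 \<le> i' \<and> i' \<le> J \<and> k = L i' \<and> AA cc i' j1))"
    using 3(1) ok J_def j1_def by simp
  define j2 where "j2 = vf L cc J j1"
  have vfeq: "vf L cc (Suc (Suc i)) j = ?t j2"
    by (simp add: j1_def j2_def J_def)
  have Lne: "\<And>l. l \<le> Suc J \<Longrightarrow> L (Suc J) \<noteq> cc l" using okJ unfolding ladok_def by simp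
  have Linj: "\<And>i'. i' \<le> J \<Longrightarrow> L (Suc J) \<noteq> L i'"
  proof
    fix i' assume a: "i' \<le> J" "L (Suc J) = L i'"
    then have "Suc J = i'" using okJ unfolding ladok_def by (meson le_SucI order_refl)
    then show False using a by simp
  qed
  have ccne: "\<And>l i'. l \<le> Suc J \<Longrightarrow> 1 \<le> i' \<Longrightarrow> i' \<le> J \<Longrightarrow> L i' \<noteq> cc l"
    using okJ unfolding ladok_def by (metis le_SucI)
  have c1: "\<And>l. l \<le> Suc J \<Longrightarrow> bit j1 (cc l) = bit j (cc l)"
    using Lne unfolding j1_def tf_bit by metis
  have A1: "\<And>i'. i' \<le> J \<Longrightarrow> AA cc i' j1 = AA cc i' j"
    unfolding AA_def using c1 by (meson le_SucI le_trans)
  have c2: "\<And>l. l \<le> Suc J \<Longrightarrow> bit j2 (cc l) = bit j (cc l)"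
  proof -
    fix l assume l: "l \<le> Suc J"
    have "\<not>(\<exists>i'. 1 \<le> i' \<and> i' \<le> J \<and> cc l = L i' \<and> AA cc i' j1)"
      using ccne[OF l] by metis
    then have "bit j2 (cc l) = bit j1 (cc l)"
      unfolding j2_def IH by simp
    then show "bit j2 (cc l) = bit j (cc l)" using c1[OF l] by simp
  qed
  have J1: "1 \<le> J" "J \<le> J" by (simp_all add: J_def)
  have LJ: "bit j2 (L J) = (bit j (L J) \<noteq> AA cc J j)"
  proof -
    have u: "\<And>i'. 1 \<le> i' \<Longrightarrow> i' \<le> J \<Longrightarrow> L J = L i' \<Longrightarrow> i' = J"
    proof -
      fix i' assume a: "1 \<le> i'" "i' \<le> J" "L J = L i'"
      have "\<forall>i\<le>Suc J. \<forall>i'\<le>Suc J. L i = L i' \<longrightarrow> i = i'" using okJ unfolding ladok_def by blast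
      moreover have "J \<le> Suc J" "i' \<le> Suc J" using a by auto
      ultimately show "i' = J" using a(3) by metis
    qed
    have "bit j2 (L J) = (bit j1 (L J) \<noteq> AA cc J j1)"
      unfolding j2_def IH using u J1 by blast
    moreover have "bit j1 (L J) = bit j (L J)"
      unfolding j1_def tf_bit using Linj[of J] by simp
    ultimately show ?thesis using A1[of J] by simp
  qed
  have AS: "AA cc (Suc J) j = (AA cc J j \<and> bit j (cc (Suc J)))"
    unfolding AA_def by (auto simp: le_Suc_eq)
  show ?case
  proof (cases "k = L (Suc J)")
    case True
    have r: "(\<exists>i'. 1 \<le> i' \<and> i' \<le> Suc (Suc i) \<and> k = L i' \<and> AA cc i' j) = AA cc (Suc J) j"
    proof
      assume "\<exists>i'. 1 \<le> i' \<and> i' \<le> Suc (Suc i) \<and> k = L i' \<and> AA cc i' j"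
      then obtain i' where "1 \<le> i'" "i' \<le> Suc J" "L (Suc J) = L i'" "AA cc i' j"
        using True J_def by auto
      moreover then have "i' = Suc J" using okJ unfolding ladok_def by auto
      ultimately show "AA cc (Suc J) j" by simp
    next
      assume "AA cc (Suc J) j" then show "\<exists>i'. 1 \<le> i' \<and> i' \<le> Suc (Suc i) \<and> k = L i' \<and> AA cc i' j"
        using True J_def by (intro exI[of _ "Suc J"]) simp
    qed
    have b2: "bit j2 k = bit j1 k"
      unfolding j2_def IH using True Linj by auto
    have b1: "bit j1 k = (bit j k \<noteq> (bit j (cc (Suc J)) \<and> bit j (L J)))"
      unfolding j1_def tf_bit using True by simp
    have "bit (vf L cc (Suc (Suc i)) j) k = (bit j2 k \<noteq> (bit j2 (cc (Suc J)) \<and> bit j2 (L J)))"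
      unfolding vfeq tf_bit using True by simp
    then show ?thesis unfolding r AS using b2 b1 LJ c2[of "Suc J"] by auto
  next
    case False
    have r: "(\<exists>i'. 1 \<le> i' \<and> i' \<le> Suc (Suc i) \<and> k = L i' \<and> AA cc i' j) =
             (\<exists>i'. 1 \<le> i' \<and> i' \<le> J \<and> k = L i' \<and> AA cc i' j1)"
      using False A1 J_def by (auto simp: le_Suc_eq)
    have "bit (vf L cc (Suc (Suc i)) j) k = bit j2 k"
      unfolding vfeq tf_bit using False by simp
    also have "\<dots> = (bit j1 k \<noteq> (\<exists>i'. 1 \<le> i' \<and> i' \<le> J \<and> k = L i' \<and> AA cc i' j1))"
      unfolding j2_def IH ..
    also have "bit j1 k = bit j k" unfolding j1_def tf_bit using False by simp
    finally show ?thesis unfolding r .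
  qed
qed


lemma m2_eq_iff: "(m2 a b c d = m2 a' b' c' d') = (a = a' \<and> b = b' \<and> c = c' \<and> d = d')"
  by (metis m2_idx(1-4))

lemma ct_m2: "conj_transpose (m2 a b c d) = m2 (cnj a) (cnj c) (cnj b) (cnj d)"
  by (rule mat2_eqI) (auto simp: conj_transpose_def)

lemma unitary2_m2: "unitary2 (m2 a b c d) = (a * cnj a + b * cnj b = 1 \<and> a * cnj c + b * cnj d = 0 \<and>
    c * cnj a + d * cnj b = 0 \<and> c * cnj c + d * cnj d = 1)"
  by (simp add: unitary2_def ct_m2 one2 m2_eq_iff)

lemma cis_cnj_mult[simp]: "cis x * cnj (cis x) = 1"
  by (simp add: cis_cnj cis_mult)

lemma hh_cnj[simp]: "cnj hh = hh" by (simp add: hh_def)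

lemma unitary_gates: "unitary2 Xm" "unitary2 Tg" "unitary2 Tdg" "unitary2 Hg"
  by (simp_all add: unitary2_m2 Xm_def Tg_def Tdg_def Hg_def hh_sq)

lemma cnot_count_append: "cnot_count (xs @ ys) = cnot_count xs + cnot_count ys"
  by (simp add: cnot_count_def)

lemma circuit_wf_append: "circuit_wf n (xs @ ys) = (circuit_wf n xs \<and> circuit_wf n ys)"
  by (auto simp: circuit_wf_def)

lemma toff_wf: "a < n \<Longrightarrow> b < n \<Longrightarrow> c < n \<Longrightarrow> a \<noteq> b \<Longrightarrow> a \<noteq> c \<Longrightarrow> b \<noteq> c \<Longrightarrow> circuit_wf n (toff_gates a b c)"
  by (auto simp: circuit_wf_def toff_gates_def unitary_gates)

lemma lad_count: "cnot_count (lad L cc J) \<le> 12 * J"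
  proof (induction L cc J rule: lad.induct)
  case (1 L cc) then show ?case by (simp add: cnot_count_def)
next
  case (2 L cc) then show ?case by (simp add: cnot_count_toff)
next
  case (3 L cc i) then show ?case by (simp add: cnot_count_append cnot_count_toff)
qed

lemma tf_ok: assumes ok: "ladok n L cc J" and i: "1 \<le> i" "i \<le> J"
  shows "cc i < n \<and> L (i-1) < n \<and> L i < n \<and> cc i \<noteq> L (i-1) \<and> cc i \<noteq> L i \<and> L (i-1) \<noteq> L i"
proof -
  have lt: "cc i < n" "L (i-1) < n" "L i < n" using ok i unfolding ladok_def by auto
  have d1: "cc i \<noteq> L (i-1)"
  proof (cases "i - 1 = 0")
    case True
    then have "L (i-1) = cc 0" using ok unfolding ladok_def by simp
    moreover have "cc i \<noteq> cc 0" using ok i unfolding ladok_def by (metis le0 not_one_le_zero)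
    ultimately show ?thesis by simp
  next
    case False
    then have "1 \<le> i - 1" "i - 1 \<le> J" using i by auto
    then have "\<forall>l\<le>J. L (i-1) \<noteq> cc l" using ok unfolding ladok_def by blast
    then show ?thesis using i by auto
  qed
  have d2: "cc i \<noteq> L i" using ok i unfolding ladok_def by (metis order_refl)
  have d3: "L (i-1) \<noteq> L i" using ok i unfolding ladok_def by (metis diff_le_self diff_less less_le_trans not_le zero_less_one le_numeral_extra(2) less_one)
  show ?thesis using lt d1 d2 d3 by simp
qed

lemma lad_wf: "ladok n L cc J \<Longrightarrow> circuit_wf n (lad L cc J)"
proof (induction L cc J rule: lad.induct)
  case (1 L cc)
  then show ?case by (simp add: circuit_wf_def)
next
  case (2 L cc)
  have "cc 1 < n \<and> L (1-1) < n \<and> L 1 < n \<and> cc 1 \<noteq> L (1-1) \<and> cc 1 \<noteq> L 1 \<and> L (1-1) \<noteq> L 1"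
    using tf_ok[OF 2, of 1] by simp
  then show ?case using toff_wf by simp
next
  case (3 L cc i)
  have ok: "ladok n L cc (Suc i)" using 3(2) ladok_mono by fastforce
  have "cc (Suc (Suc i)) < n \<and> L (Suc (Suc i)-1) < n \<and> L (Suc (Suc i)) < n \<and> cc (Suc (Suc i)) \<noteq> L (Suc (Suc i)-1)
     \<and> cc (Suc (Suc i)) \<noteq> L (Suc (Suc i)) \<and> L (Suc (Suc i)-1) \<noteq> L (Suc (Suc i))"
    using tf_ok[OF 3(2), of "Suc (Suc i)"] by simp
  then have "circuit_wf n (toff_gates (cc (Suc (Suc i))) (L (Suc i)) (L (Suc (Suc i))))"
    using toff_wf by simp
  then show ?case using 3(1)[OF ok] by (simp add: circuit_wf_append)
qed


definition gL :: "nat list \<Rightarrow> nat list \<Rightarrow> nat \<Rightarrow> nat \<Rightarrow> nat" where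
  "gL cs anc t i = (if i = 0 then cs!0 else if i < length cs - 1 then anc!(i-1) else t)"

definition gad :: "nat list \<Rightarrow> nat list \<Rightarrow> nat \<Rightarrow> gate list" where
  "gad cs anc t = (if cs = [] then [Single t Xm] else if length cs = 1 then [CNOT (cs!0) t]
     else lad (gL cs anc t) (nth cs) (length cs - 1) @ lad (gL cs anc t) (nth cs) (length cs - 2))"

definition gadok :: "nat \<Rightarrow> nat list \<Rightarrow> nat list \<Rightarrow> nat \<Rightarrow> bool" where
  "gadok n cs anc t \<longleftrightarrow> distinct (t # cs @ anc) \<and> (\<forall>q\<in>set (t # cs @ anc). q < n) \<and> length cs \<le> length anc + 2"

definition gpos :: "nat \<Rightarrow> nat \<Rightarrow> nat" where
  "gpos m i = (if i = 0 then 1 else if i < m - 1 then m + i else 0)"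

lemma gL_pos: "2 \<le> length cs \<Longrightarrow> i \<le> length cs - 1 \<Longrightarrow> length cs \<le> length anc + 2 \<Longrightarrow>
   gL cs anc t i = (t # cs @ anc) ! gpos (length cs) i \<and> gpos (length cs) i < length (t # cs @ anc)"
  by (auto simp: gL_def gpos_def nth_append)

lemma cc_pos: "l < length cs \<Longrightarrow> cs ! l = (t # cs @ anc) ! Suc l"
  by (simp add: nth_append)

lemma gpos_inj: "2 \<le> m \<Longrightarrow> i \<le> m - 1 \<Longrightarrow> i' \<le> m - 1 \<Longrightarrow> gpos m i = gpos m i' \<Longrightarrow> i = i'"
  unfolding gpos_def by (cases "i = 0"; cases "i' = 0"; cases "i < m - 1"; cases "i' < m - 1") auto

lemma gpos_ne: "2 \<le> m \<Longrightarrow> i \<le> m - 1 \<Longrightarrow> 1 \<le> i \<Longrightarrow> l \<le> m - 1 \<Longrightarrow> gpos m i \<noteq> Suc l"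
  unfolding gpos_def by (cases "i < m - 1") auto

lemma gad_ladok:
  assumes ok: "gadok n cs anc t" and m: "2 \<le> length cs"
  shows "ladok n (gL cs anc t) (nth cs) (length cs - 1)"
proof -
  let ?xs = "t # cs @ anc" and ?m = "length cs"
  have d: "distinct ?xs" and lt: "\<forall>q\<in>set ?xs. q < n" and la: "?m \<le> length anc + 2"
    using ok unfolding gadok_def by auto
  have P: "\<And>i. i \<le> ?m - 1 \<Longrightarrow> gL cs anc t i = ?xs ! gpos ?m i \<and> gpos ?m i < length ?xs"
    using gL_pos[OF m _ la] by blast
  have C: "\<And>l. l \<le> ?m - 1 \<Longrightarrow> cs ! l = ?xs ! Suc l \<and> Suc l < length ?xs"
  proof -
    fix l assume "l \<le> ?m - 1"
    then have "l < ?m" using m by arith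
    then show "cs ! l = ?xs ! Suc l \<and> Suc l < length ?xs" using cc_pos[of l cs t anc] by simp
  qed
  have inj: "\<And>p q. p < length ?xs \<Longrightarrow> q < length ?xs \<Longrightarrow> ?xs ! p = ?xs ! q \<Longrightarrow> p = q"
    using d nth_eq_iff_index_eq by blast
  have a: "\<forall>i\<le>?m - 1. gL cs anc t i < n \<and> cs ! i < n"
  proof (intro allI impI conjI)
    fix i assume i: "i \<le> ?m - 1"
    have "?xs ! gpos ?m i \<in> set ?xs" using P[OF i] by (intro nth_mem) simp
    then have "?xs ! gpos ?m i < n" using lt by blast
    then show "gL cs anc t i < n" using P[OF i] by simp
    have "?xs ! Suc i \<in> set ?xs" using C[OF i] by (intro nth_mem) simp
    then have "?xs ! Suc i < n" using lt by blast
    then show "cs ! i < n" using C[OF i] by simp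
  qed
  have b: "\<forall>i\<le>?m - 1. \<forall>i'\<le>?m - 1. gL cs anc t i = gL cs anc t i' \<longrightarrow> i = i'"
  proof (intro allI impI)
    fix i i' assume h: "i \<le> ?m - 1" "i' \<le> ?m - 1" "gL cs anc t i = gL cs anc t i'"
    have e1: "gL cs anc t i = ?xs ! gpos ?m i" and p1: "gpos ?m i < length ?xs"
      using P[OF h(1)] by (rule conjunct1, rule conjunct2)
    have e2: "gL cs anc t i' = ?xs ! gpos ?m i'" and p2: "gpos ?m i' < length ?xs"
      using P[OF h(2)] by (rule conjunct1, rule conjunct2)
    have "?xs ! gpos ?m i = ?xs ! gpos ?m i'" using e1 e2 h(3) by argo
    then have "gpos ?m i = gpos ?m i'" using inj[OF p1 p2] by blast
    then show "i = i'" using gpos_inj[OF m h(1) h(2)] by blast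
  qed
  have c: "\<forall>i\<le>?m - 1. \<forall>i'\<le>?m - 1. cs ! i = cs ! i' \<longrightarrow> i = i'"
  proof (intro allI impI)
    fix i i' assume h: "i \<le> ?m - 1" "i' \<le> ?m - 1" "cs ! i = cs ! i'"
    have e1: "cs ! i = ?xs ! Suc i" and p1: "Suc i < length ?xs"
      using C[OF h(1)] by (rule conjunct1, rule conjunct2)
    have e2: "cs ! i' = ?xs ! Suc i'" and p2: "Suc i' < length ?xs"
      using C[OF h(2)] by (rule conjunct1, rule conjunct2)
    have "?xs ! Suc i = ?xs ! Suc i'" using e1 e2 h(3) by argo
    then have "Suc i = Suc i'" using inj[OF p1 p2] by blast
    then show "i = i'" by simp
  qed
  have e: "\<forall>i\<le>?m - 1. \<forall>l\<le>?m - 1. 1 \<le> i \<longrightarrow> gL cs anc t i \<noteq> cs ! l"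
  proof (intro allI impI)
    fix i l assume h: "i \<le> ?m - 1" "l \<le> ?m - 1" "1 \<le> i"
    have e1: "gL cs anc t i = ?xs ! gpos ?m i" and p1: "gpos ?m i < length ?xs"
      using P[OF h(1)] by (rule conjunct1, rule conjunct2)
    have e2: "cs ! l = ?xs ! Suc l" and p2: "Suc l < length ?xs"
      using C[OF h(2)] by (rule conjunct1, rule conjunct2)
    show "gL cs anc t i \<noteq> cs ! l"
    proof
      assume "gL cs anc t i = cs ! l"
      then have "?xs ! gpos ?m i = ?xs ! Suc l" using e1 e2 by argo
      then have "gpos ?m i = Suc l" using inj[OF p1 p2] by blast
      then show False using gpos_ne[OF m h(1) h(3) h(2)] by blast
    qed
  qed
  have z: "nth cs 0 = gL cs anc t 0" by (simp add: gL_def)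
  show ?thesis unfolding ladok_def using a b c e z by blast
qed



lemma circuit_single: "circuit_mat n [g] = gate_mat n g"
  using left_mult_one_mat[OF gate_carrier] by simp

lemma gad_sem:
  assumes ok: "gadok n cs anc t"
  shows "circuit_mat n (gad cs anc t) = ctrl n t (\<lambda>j. if (\<forall>c\<in>set cs. bit j c) then Xm else m2 1 0 0 1)"
proof -
  have tn: "t < n" and tcs: "t \<notin> set cs" and csn: "\<forall>c\<in>set cs. c < n" using ok unfolding gadok_def by auto
  consider (nil) "cs = []" | (one) c where "cs = [c]" | (more) "2 \<le> length cs"
    by (metis One_nat_def length_0_conv length_Suc_conv less_2_cases not_le)
  then show ?thesis
  proof cases
    case nil
    then show ?thesis using tn by (simp add: gad_def gate_single)
  next
    case one
    then show ?thesis using tn tcs csn by (simp add: gad_def cnot_ctrl)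
  next
    case more
    let ?L = "gL cs anc t" and ?cc = "nth cs" and ?J = "length cs - 1"
    have okJ: "ladok n ?L ?cc ?J" by (rule gad_ladok[OF ok more])
    have ok2: "ladok n ?L ?cc (?J - 1)" using okJ ladok_mono by fastforce
    have J2: "?J - 1 = length cs - 2" by simp
    have LJ: "?L ?J = t" using more by (simp add: gL_def)
    have Lne: "\<And>i l. 1 \<le> i \<Longrightarrow> i \<le> ?J \<Longrightarrow> l \<le> ?J \<Longrightarrow> ?L i \<noteq> ?cc l"
      using okJ unfolding ladok_def by blast
    have Linj: "\<And>i. i \<le> ?J \<Longrightarrow> ?L i = ?L ?J \<Longrightarrow> i = ?J"
      using okJ unfolding ladok_def by blast
    have fun_eq: "vf ?L ?cc (?J - 1) (vf ?L ?cc ?J j) = (if (\<forall>c\<in>set cs. bit j c) then flip_bit t j else j)" for j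
    proof (rule bit_eq_iff[THEN iffD2], intro allI impI)
      fix k
      let ?j1 = "vf ?L ?cc ?J j"
      have ccb: "bit ?j1 (?cc l) = bit j (?cc l)" if l: "l \<le> ?J" for l
      proof -
        have "\<not> (\<exists>i. 1 \<le> i \<and> i \<le> ?J \<and> ?cc l = ?L i \<and> AA ?cc i j)" using Lne l by metis
        then show ?thesis using vf_bits[OF okJ, of j "?cc l"] by simp
      qed
      have AAeq: "AA ?cc i ?j1 = AA ?cc i j" if "i \<le> ?J" for i
        unfolding AA_def using ccb that by auto
      have b1: "bit (vf ?L ?cc (?J - 1) ?j1) k =
          (bit ?j1 k \<noteq> (\<exists>i. 1 \<le> i \<and> i \<le> ?J - 1 \<and> k = ?L i \<and> AA ?cc i j))"
      proof -
        have "(\<exists>i. 1 \<le> i \<and> i \<le> ?J - 1 \<and> k = ?L i \<and> AA ?cc i ?j1) = (\<exists>i. 1 \<le> i \<and> i \<le> ?J - 1 \<and> k = ?L i \<and> AA ?cc i j)"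
        proof (intro iffI; elim exE conjE)
          fix i assume "1 \<le> i" "i \<le> ?J - 1" "k = ?L i" "AA ?cc i ?j1"
          moreover have "i \<le> ?J" using \<open>i \<le> ?J - 1\<close> by arith
          ultimately show "\<exists>i. 1 \<le> i \<and> i \<le> ?J - 1 \<and> k = ?L i \<and> AA ?cc i j" using AAeq by blast
        next
          fix i assume "1 \<le> i" "i \<le> ?J - 1" "k = ?L i" "AA ?cc i j"
          moreover have "i \<le> ?J" using \<open>i \<le> ?J - 1\<close> by arith
          ultimately show "\<exists>i. 1 \<le> i \<and> i \<le> ?J - 1 \<and> k = ?L i \<and> AA ?cc i ?j1" using AAeq by blast
        qed
        then show ?thesis using vf_bits[OF ok2, of ?j1 k] by simp
      qed
      have b2: "bit ?j1 k = (bit j k \<noteq> (\<exists>i. 1 \<le> i \<and> i \<le> ?J \<and> k = ?L i \<and> AA ?cc i j))"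
        by (rule vf_bits[OF okJ])
      have AJ: "AA ?cc ?J j = (\<forall>c\<in>set cs. bit j c)"
      proof
        assume a: "AA ?cc ?J j"
        show "\<forall>c\<in>set cs. bit j c"
        proof
          fix c assume "c \<in> set cs"
          then obtain l where "l < length cs" "c = cs ! l" by (auto simp: in_set_conv_nth)
          then show "bit j c" using a unfolding AA_def by auto
        qed
      next
        assume a: "\<forall>c\<in>set cs. bit j c"
        show "AA ?cc ?J j" unfolding AA_def
        proof (intro allI impI)
          fix l assume "l \<le> ?J"
          then have "l < length cs" using more by arith
          then show "bit j (cs ! l)" using a nth_mem by blast
        qed
      qed
      have E: "(\<exists>i. 1 \<le> i \<and> i \<le> ?J \<and> k = ?L i \<and> AA ?cc i j) =
               ((\<exists>i. 1 \<le> i \<and> i \<le> ?J - 1 \<and> k = ?L i \<and> AA ?cc i j) \<or> (k = t \<and> AA ?cc ?J j))"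
      proof (intro iffI)
        assume "\<exists>i. 1 \<le> i \<and> i \<le> ?J \<and> k = ?L i \<and> AA ?cc i j"
        then obtain i where i: "1 \<le> i" "i \<le> ?J" "k = ?L i" "AA ?cc i j" by blast
        show "(\<exists>i. 1 \<le> i \<and> i \<le> ?J - 1 \<and> k = ?L i \<and> AA ?cc i j) \<or> (k = t \<and> AA ?cc ?J j)"
        proof (cases "i = ?J")
          case True
          then show ?thesis using i LJ by simp
        next
          case False
          then have "i \<le> ?J - 1" using i by arith
          then show ?thesis using i by blast
        qed
      next
        assume "(\<exists>i. 1 \<le> i \<and> i \<le> ?J - 1 \<and> k = ?L i \<and> AA ?cc i j) \<or> (k = t \<and> AA ?cc ?J j)"
        then show "\<exists>i. 1 \<le> i \<and> i \<le> ?J \<and> k = ?L i \<and> AA ?cc i j"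
        proof
          assume "\<exists>i. 1 \<le> i \<and> i \<le> ?J - 1 \<and> k = ?L i \<and> AA ?cc i j"
          then obtain i where i: "1 \<le> i" "i \<le> ?J - 1" "k = ?L i" "AA ?cc i j" by blast
          have "i \<le> ?J" using i by arith
          then show ?thesis using i by blast
        next
          assume a: "k = t \<and> AA ?cc ?J j"
          have "1 \<le> ?J" using more by arith
          then show ?thesis using a LJ by (intro exI[of _ ?J]) simp
        qed
      qed
      have E2: "k = t \<Longrightarrow> \<not> (\<exists>i. 1 \<le> i \<and> i \<le> ?J - 1 \<and> k = ?L i \<and> AA ?cc i j)"
      proof
        assume kt: "k = t" and "\<exists>i. 1 \<le> i \<and> i \<le> ?J - 1 \<and> k = ?L i \<and> AA ?cc i j"
        then obtain i where i: "1 \<le> i" "i \<le> ?J - 1" "?L i = ?L ?J" using LJ by auto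
        have "i \<le> ?J" using i by arith
        then have "i = ?J" using Linj i by blast
        then show False using i more by arith
      qed
      show "bit (vf ?L ?cc (?J - 1) ?j1) k = bit (if (\<forall>c\<in>set cs. bit j c) then flip_bit t j else j) k"
        unfolding b1 b2 using E E2 AJ by (auto simp: bit_flip_bit_iff)
    qed
    have fe: "(\<lambda>j. vf ?L ?cc (?J - 1) (vf ?L ?cc ?J j)) = (\<lambda>j. if (\<forall>c\<in>set cs. bit j c) then flip_bit t j else j)"
      by (rule ext, rule fun_eq)
    have g: "gad cs anc t = lad ?L ?cc ?J @ lad ?L ?cc (?J - 1)"
      using more unfolding gad_def J2 by auto
    have "circuit_mat n (gad cs anc t) = bperm n (vf ?L ?cc (?J - 1)) * bperm n (vf ?L ?cc ?J)"
      unfolding g circuit_append lad_circuit[OF okJ] lad_circuit[OF ok2] ..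
    also have "\<dots> = bperm n (\<lambda>j. vf ?L ?cc (?J - 1) (vf ?L ?cc ?J j))"
      by (rule bperm_mult) (rule vf_lt[OF okJ])
    also have "\<dots> = bperm n (\<lambda>j. if (\<forall>c\<in>set cs. bit j c) then flip_bit t j else j)"
      unfolding fe ..
    also have "\<dots> = ctrl n t (\<lambda>j. if (\<forall>c\<in>set cs. bit j c) then Xm else m2 1 0 0 1)"
      using tcs tn by (intro bperm_ctrl) (auto simp: bit_unset_bit_iff)
    finally show ?thesis .
  qed
qed


lemma gad_count: "cnot_count (gad cs anc t) \<le> 24 * length cs"
proof -
  have a: "cnot_count (lad L cc J) \<le> 12 * J" for L cc J by (rule lad_count)
  show ?thesis
    unfolding gad_def using a[of "gL cs anc t" "nth cs" "length cs - 1"] a[of "gL cs anc t" "nth cs" "length cs - 2"]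
    by (auto simp: cnot_count_append cnot_count_def is_CNOT_def)
qed

lemma gad_wf: assumes ok: "gadok n cs anc t" shows "circuit_wf n (gad cs anc t)"
proof -
  have tn: "t < n" and tcs: "t \<notin> set cs" and csn: "\<forall>c\<in>set cs. c < n" using ok unfolding gadok_def by auto
  consider (nil) "cs = []" | (one) c where "cs = [c]" | (more) "2 \<le> length cs"
    by (metis One_nat_def length_0_conv length_Suc_conv less_2_cases not_le)
  then show ?thesis
  proof cases
    case nil
    then show ?thesis using tn by (simp add: gad_def circuit_wf_def unitary_gates)
  next
    case one
    then show ?thesis using tn tcs csn by (auto simp: gad_def circuit_wf_def)
  next
    case more
    have okJ: "ladok n (gL cs anc t) (nth cs) (length cs - 1)" by (rule gad_ladok[OF ok more])
    have ok2: "ladok n (gL cs anc t) (nth cs) (length cs - 2)" using okJ ladok_mono by fastforce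
    have "cs \<noteq> []" "length cs \<noteq> 1" using more by auto
    then show ?thesis using lad_wf[OF okJ] lad_wf[OF ok2] by (simp add: gad_def circuit_wf_append)
  qed
qed

definition Sg :: "real \<Rightarrow> complex mat" where "Sg th = m2 (cis (-(th/8))) 0 0 (cis (th/8))"
definition Sdg :: "real \<Rightarrow> complex mat" where "Sdg th = m2 (cis (th/8)) 0 0 (cis (-(th/8)))"
definition rz :: "real \<Rightarrow> complex mat" where "rz th = m2 (cis (-(th/2))) 0 0 (cis (th/2))"

definition mcrz :: "nat list \<Rightarrow> nat \<Rightarrow> real \<Rightarrow> gate list" where
  "mcrz cs t th = (let h = length cs div 2; c1 = take h cs; c2 = drop h cs in
     [Single t (Sg th)] @ gad c2 c1 t @ [Single t (Sdg th)] @ gad c1 c2 t @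
     [Single t (Sg th)] @ gad c2 c1 t @ [Single t (Sdg th)] @ gad c1 c2 t)"

definition mcok :: "nat \<Rightarrow> nat list \<Rightarrow> nat \<Rightarrow> bool" where
  "mcok n cs t \<longleftrightarrow> distinct (t # cs) \<and> t < n \<and> (\<forall>c\<in>set cs. c < n)"

lemma mcok_gadok:
  assumes "mcok n cs t"
  shows "gadok n (take (length cs div 2) cs) (drop (length cs div 2) cs) t"
    "gadok n (drop (length cs div 2) cs) (take (length cs div 2) cs) t"
proof -
  let ?h = "length cs div 2"
  have d: "distinct (t # cs)" and lt: "t < n" "\<forall>c\<in>set cs. c < n" using assms unfolding mcok_def by auto
  have cs: "cs = take ?h cs @ drop ?h cs" by simp
  have d2: "distinct (t # take ?h cs @ drop ?h cs)" using d by simp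
  have d3: "distinct (t # drop ?h cs @ take ?h cs)"
  proof -
    have a: "distinct (take ?h cs)" "distinct (drop ?h cs)" "set (take ?h cs) \<inter> set (drop ?h cs) = {}" "t \<notin> set (take ?h cs)" "t \<notin> set (drop ?h cs)"
      using d2 unfolding distinct.simps(2) distinct_append set_append by blast+
    then show ?thesis by (simp add: distinct_append Int_commute)
  qed
  have s: "set (take ?h cs) \<subseteq> set cs" "set (drop ?h cs) \<subseteq> set cs" by (auto dest: in_set_takeD in_set_dropD)
  show "gadok n (take ?h cs) (drop ?h cs) t" unfolding gadok_def using d2 lt s by auto
  show "gadok n (drop ?h cs) (take ?h cs) t" unfolding gadok_def using d3 lt s by auto
qed

lemma Sg_carrier[simp]: "Sg th \<in> carrier_mat 2 2" "Sdg th \<in> carrier_mat 2 2" "rz th \<in> carrier_mat 2 2"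
  by (simp_all add: Sg_def Sdg_def rz_def)

lemma mcrz_prod: "(if P then Xm else m2 1 0 0 1) * Sdg th * (if Q then Xm else m2 1 0 0 1) * Sg th *
  (if P then Xm else m2 1 0 0 1) * Sdg th * (if Q then Xm else m2 1 0 0 1) * Sg th =
  (if P \<and> Q then rz th else m2 1 0 0 1)"
  apply (cases P; cases Q)
  apply (simp_all add: Xm_def Sg_def Sdg_def rz_def cis_mult m2_eq_iff)
  done

lemma mcrz_sem:
  assumes ok: "mcok n cs t"
  shows "circuit_mat n (mcrz cs t th) = ctrl n t (\<lambda>j. if (\<forall>c\<in>set cs. bit j c) then rz th else m2 1 0 0 1)"
proof -
  let ?h = "length cs div 2"
  let ?c1 = "take ?h cs" and ?c2 = "drop ?h cs"
  have tn: "t < n" using ok unfolding mcok_def by simp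
  have g1: "circuit_mat n (gad ?c1 ?c2 t) = ctrl n t (\<lambda>j. if (\<forall>c\<in>set ?c1. bit j c) then Xm else m2 1 0 0 1)"
    by (rule gad_sem[OF mcok_gadok(1)[OF ok]])
  have g2: "circuit_mat n (gad ?c2 ?c1 t) = ctrl n t (\<lambda>j. if (\<forall>c\<in>set ?c2. bit j c) then Xm else m2 1 0 0 1)"
    by (rule gad_sem[OF mcok_gadok(2)[OF ok]])
  have s: "circuit_mat n [Single t (Sg th)] = ctrl n t (\<lambda>_. Sg th)" "circuit_mat n [Single t (Sdg th)] = ctrl n t (\<lambda>_. Sdg th)"
    using tn by (simp_all add: circuit_single gate_single)
  define P where "P j = (\<forall>c\<in>set ?c1. bit j c)" for j :: nat
  define Q where "Q j = (\<forall>c\<in>set ?c2. bit j c)" for j :: nat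
  have PQ: "(\<forall>c\<in>set cs. bit j c) = (P j \<and> Q j)" for j
  proof -
    have "set cs = set ?c1 \<union> set ?c2" by (metis append_take_drop_id set_append)
    then show ?thesis unfolding P_def Q_def by blast
  qed
  have "circuit_mat n (mcrz cs t th) = ctrl n t (\<lambda>j. (if P j then Xm else m2 1 0 0 1) * Sdg th *
       (if Q j then Xm else m2 1 0 0 1) * Sg th * (if P j then Xm else m2 1 0 0 1) * Sdg th *
       (if Q j then Xm else m2 1 0 0 1) * Sg th)"
    unfolding mcrz_def Let_def circuit_append g1 g2 s P_def Q_def
    using tn by (simp add: ctrl_mult)
  also have "\<dots> = ctrl n t (\<lambda>j. if (\<forall>c\<in>set cs. bit j c) then rz th else m2 1 0 0 1)"
    unfolding PQ mcrz_prod ..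
  finally show ?thesis .
qed


lemma mcrz_count: "cnot_count (mcrz cs t th) \<le> 48 * length cs"
proof -
  let ?h = "length cs div 2"
  have a: "cnot_count (gad (take ?h cs) (drop ?h cs) t) \<le> 24 * length (take ?h cs)" by (rule gad_count)
  have b: "cnot_count (gad (drop ?h cs) (take ?h cs) t) \<le> 24 * length (drop ?h cs)" by (rule gad_count)
  have s: "cnot_count [Single t G] = 0" for G by (simp add: cnot_count_def is_CNOT_def)
  have l: "length (take ?h cs) + length (drop ?h cs) = length cs" by simp
  show ?thesis unfolding mcrz_def Let_def cnot_count_append s using a b l by linarith
qed

lemma unitary_S: "unitary2 (Sg th)" "unitary2 (Sdg th)"
  by (simp_all add: unitary2_m2 Sg_def Sdg_def)

lemma mcrz_wf: assumes ok: "mcok n cs t" shows "circuit_wf n (mcrz cs t th)"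
proof -
  have tn: "t < n" using ok unfolding mcok_def by simp
  show ?thesis
    using gad_wf[OF mcok_gadok(1)[OF ok]] gad_wf[OF mcok_gadok(2)[OF ok]] tn unitary_S
    unfolding mcrz_def Let_def circuit_wf_append by (simp add: circuit_wf_def)
qed

definition gph :: "real \<Rightarrow> complex mat" where "gph th = m2 (cis th) 0 0 (cis th)"

fun pht :: "nat \<Rightarrow> real \<Rightarrow> nat \<Rightarrow> gate list" where
  "pht k th 0 = (if k = 0 then [Single 0 (gph th)] else [])"
| "pht 0 th (Suc M) = [Single 0 (gph th)]"
| "pht (Suc k) th (Suc M) = mcrz [0..<k] k th @ pht k (th/2) M"

definition phs :: "nat \<Rightarrow> real \<Rightarrow> nat \<Rightarrow> nat \<Rightarrow> complex" where
  "phs k th M j = (if \<forall>l<k. bit j l then cis th else 1) *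
      (if M < k \<and> (\<forall>l<k - M. bit j l) then cis (-(th / 2^M)) else 1)"

lemma mcrz_diag: assumes "k < n"
  shows "circuit_mat n (mcrz [0..<k] k th) =
    diagm n (\<lambda>j. if \<forall>l<k. bit j l then (if bit j k then cis (th/2) else cis (-(th/2))) else 1)"
proof -
  have ok: "mcok n [0..<k] k" using assms unfolding mcok_def by auto
  have "circuit_mat n (mcrz [0..<k] k th) = ctrl n k (\<lambda>j. if (\<forall>c\<in>set [0..<k]. bit j c) then rz th else m2 1 0 0 1)"
    by (rule mcrz_sem[OF ok])
  also have "\<dots> = ctrl n k (\<lambda>j. m2 (if \<forall>l<k. bit j l then cis (-(th/2)) else 1) 0 0 (if \<forall>l<k. bit j l then cis (th/2) else 1))"
    by (intro arg_cong[where f="ctrl n k"] ext) (simp add: rz_def)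
  also have "\<dots> = diagm n (\<lambda>j. if bit j k then (if \<forall>l<k. bit (unset_bit k j) l then cis (th/2) else 1)
        else (if \<forall>l<k. bit (unset_bit k j) l then cis (-(th/2)) else 1))"
    by (rule ctrl_diag[OF assms])
  also have "\<dots> = diagm n (\<lambda>j. if \<forall>l<k. bit j l then (if bit j k then cis (th/2) else cis (-(th/2))) else 1)"
    by (intro arg_cong[where f="diagm n"] ext) (auto simp: bit_unset_bit_iff)
  finally show ?thesis .
qed

lemma gph_diag: "0 < n \<Longrightarrow> gate_mat n (Single 0 (gph th)) = diagm n (\<lambda>_. cis th)"
  using ctrl_diag[of 0 n "\<lambda>_. cis th" "\<lambda>_. cis th"] by (simp add: gate_single gph_def)

lemma pht_sem: "0 < n \<Longrightarrow> k \<le> n \<Longrightarrow> circuit_mat n (pht k th M) = diagm n (phs k th M)"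
proof (induction k th M rule: pht.induct)
  case (1 k th)
  show ?case
  proof (cases "k = 0")
    case True
    then show ?thesis using 1 by (simp add: circuit_single gph_diag phs_def)
  next
    case False
    have "phs k th 0 = (\<lambda>_. 1)"
      using False by (auto simp: phs_def fun_eq_iff cis_mult)
    then show ?thesis using False by (simp add: bperm_id[symmetric] diagm_def bperm_def)
  qed
next
  case (2 th M)
  then show ?case by (simp add: circuit_single gph_diag phs_def)
next
  case (3 k th M)
  have IH: "circuit_mat n (pht k (th/2) M) = diagm n (phs k (th/2) M)" using 3 by simp
  have "circuit_mat n (pht (Suc k) th (Suc M)) = diagm n (phs k (th/2) M) *
      diagm n (\<lambda>j. if \<forall>l<k. bit j l then (if bit j k then cis (th/2) else cis (-(th/2))) else 1)"
    using 3(3) by (simp add: circuit_append IH mcrz_diag)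
  also have "\<dots> = diagm n (phs (Suc k) th (Suc M))"
    unfolding diagm_mult
  proof (intro arg_cong[where f="diagm n"] ext)
    fix j :: nat
    have e: "(\<forall>l<Suc k. bit j l) = ((\<forall>l<k. bit j l) \<and> bit j k)" by (auto simp: less_Suc_eq)
    have d: "th / 2 / 2 ^ M = th / 2 ^ Suc M" by simp
    show "phs k (th/2) M j * (if \<forall>l<k. bit j l then (if bit j k then cis (th/2) else cis (-(th/2))) else 1)
        = phs (Suc k) th (Suc M) j"
      unfolding phs_def e d by (auto simp: cis_mult)
  qed
  finally show ?case .
qed


lemma pht_count: "cnot_count (pht k th M) \<le> 48 * k * M"
proof (induction k th M rule: pht.induct)
  case (1 k th) then show ?case by (simp add: cnot_count_def is_CNOT_def)
next
  case (2 th M) then show ?case by (simp add: cnot_count_def is_CNOT_def)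
next
  case (3 k th M)
  have "cnot_count (mcrz [0..<k] k th) \<le> 48 * k" using mcrz_count[of "[0..<k]" k th] by simp
  moreover have "48*k + 48*k*M \<le> 48 * Suc k * Suc M" by (simp add: algebra_simps)
  ultimately show ?case using 3 by (simp only: pht.simps cnot_count_append)
qed

lemma unitary_gph: "unitary2 (gph th)" by (simp add: unitary2_m2 gph_def)

lemma pht_wf: "0 < n \<Longrightarrow> k \<le> n \<Longrightarrow> circuit_wf n (pht k th M)"
proof (induction k th M rule: pht.induct)
  case (1 k th) then show ?case by (simp add: circuit_wf_def unitary_gph)
next
  case (2 th M) then show ?case by (simp add: circuit_wf_def unitary_gph)
next
  case (3 k th M)
  have "mcok n [0..<k] k" using 3(3) unfolding mcok_def by auto
  then show ?case using 3 mcrz_wf by (simp add: circuit_wf_append)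
qed

lemma cis_minus_one: "cmod (cis x - 1) \<le> \<bar>x\<bar>"
proof -
  have "(cmod (cis x - 1))^2 = (cos x - 1)^2 + (sin x)^2" by (simp add: cmod_power2)
  also have "\<dots> = 2 - 2 * cos x" by (simp add: power2_diff sin_squared_eq)
  also have "cos x = 1 - 2 * (sin (x/2))^2" using cos_double_sin[of "x/2"] by simp
  also have "2 - 2 * (1 - 2 * (sin (x/2))^2) = 4 * (sin (x/2))^2" by simp
  also have "\<dots> \<le> 4 * (x/2)^2"
  proof -
    have "\<bar>sin (x/2)\<bar> \<le> \<bar>x/2\<bar>" by (rule abs_sin_x_le_abs_x)
    then have "\<bar>sin (x/2)\<bar>^2 \<le> \<bar>x/2\<bar>^2" by (rule power_mono) simp
    then have "(sin (x/2))^2 \<le> (x/2)^2" by (simp only: power2_abs)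
    then show ?thesis by simp
  qed
  also have "\<dots> = \<bar>x\<bar>^2" by (simp add: power2_eq_square)
  finally show ?thesis by (rule power2_le_imp_le) simp
qed

lemma phs_err: "\<exists>r. phs k th M j = (if \<forall>l<k. bit j l then cis th else 1) * r \<and> cmod (r - 1) \<le> \<bar>th\<bar> / 2^M \<and> cmod r = 1"
proof -
  let ?r = "(if M < k \<and> (\<forall>l<k - M. bit j l) then cis (-(th / 2^M)) else 1)"
  have "cmod (?r - 1) \<le> \<bar>th\<bar> / 2^M"
  proof (cases "M < k \<and> (\<forall>l<k - M. bit j l)")
    case True
    have "cmod (cis (-(th / 2^M)) - 1) \<le> \<bar>-(th / 2^M)\<bar>" by (rule cis_minus_one)
    then show ?thesis using True by simp
  next
    case False
    then have "?r = 1" by (rule if_not_P)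
    then show ?thesis by simp
  qed
  moreover have "cmod ?r = 1" by simp
  ultimately show ?thesis unfolding phs_def by blast
qed


definition Gf :: "complex mat" where "Gf = m2 hh hh (\<i> * hh) (-\<i> * hh)"
definition Gdg :: "complex mat" where "Gdg = m2 hh (-\<i> * hh) hh (\<i> * hh)"

lemma unitary_Gf: "unitary2 Gf" "unitary2 Gdg"
  by (simp_all add: unitary2_m2 Gf_def Gdg_def hh_sq algebra_simps)

lemma Gf_carrier[simp]: "Gf \<in> carrier_mat 2 2" "Gdg \<in> carrier_mat 2 2"
  by (simp_all add: Gf_def Gdg_def)

lemma cis_plus_neg: "cis t + cis (-t) = 2 * complex_of_real (cos t)"
  by (simp add: complex_eq_iff)
lemma cis_minus_neg: "cis t - cis (-t) = 2 * \<i> * complex_of_real (sin t)"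
  by (simp add: complex_eq_iff)

lemma R_eq: "Gf * rz (-2*t) * Gdg = m2 (cos t) (sin t) (- sin t) (cos t)"
proof -
  have hh2: "hh * (hh * x) = x / 2" for x by (simp add: mult.assoc[symmetric] hh_sq)
  have "Gf * rz (-2*t) * Gdg = m2 ((cis t + cis (-t)) / 2) (-\<i> * (cis t - cis (-t)) / 2)
      (\<i> * (cis t - cis (-t)) / 2) ((cis t + cis (-t)) / 2)"
    by (simp add: Gf_def Gdg_def rz_def m2_eq_iff algebra_simps hh2)
  also have "\<dots> = m2 (cos t) (sin t) (- sin t) (cos t)"
    unfolding cis_plus_neg cis_minus_neg by (simp add: m2_eq_iff)
  finally show ?thesis .
qed


lemma unitary_entries:
  assumes u: "unitary2 U"
  shows "U = m2 (U$$(0,0)) (U$$(0,1)) (U$$(1,0)) (U$$(1,1))"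
    and "U$$(0,0) * cnj (U$$(0,0)) + U$$(0,1) * cnj (U$$(0,1)) = 1"
    and "U$$(0,0) * cnj (U$$(1,0)) + U$$(0,1) * cnj (U$$(1,1)) = 0"
    and "U$$(1,0) * cnj (U$$(0,0)) + U$$(1,1) * cnj (U$$(0,1)) = 0"
    and "U$$(1,0) * cnj (U$$(1,0)) + U$$(1,1) * cnj (U$$(1,1)) = 1"
proof -
  have c: "U \<in> carrier_mat 2 2" using u unfolding unitary2_def by simp
  show e: "U = m2 (U$$(0,0)) (U$$(0,1)) (U$$(1,0)) (U$$(1,1))" by (rule m2_eta[OF c])
  have "unitary2 (m2 (U$$(0,0)) (U$$(0,1)) (U$$(1,0)) (U$$(1,1)))" using u e by simp
  then show "U$$(0,0) * cnj (U$$(0,0)) + U$$(0,1) * cnj (U$$(0,1)) = 1"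
    "U$$(0,0) * cnj (U$$(1,0)) + U$$(0,1) * cnj (U$$(1,1)) = 0"
    "U$$(1,0) * cnj (U$$(0,0)) + U$$(1,1) * cnj (U$$(0,1)) = 0"
    "U$$(1,0) * cnj (U$$(1,0)) + U$$(1,1) * cnj (U$$(1,1)) = 1"
    unfolding unitary2_m2 by auto
qed

lemma norm_le1: "z * cnj z + w * cnj w = 1 \<Longrightarrow> cmod z \<le> 1"
proof -
  assume h: "z * cnj z + w * cnj w = 1"
  have "complex_of_real ((cmod z)^2 + (cmod w)^2) = 1" using h by (simp only: of_real_add complex_norm_square)
  then have "(cmod z)^2 + (cmod w)^2 = 1" by (metis of_real_eq_1_iff)
  moreover have "0 \<le> (cmod w)^2" by simp
  ultimately have "(cmod z)^2 \<le> 1" by linarith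
  then have "(cmod z)^2 \<le> 1^2" by simp
  then show ?thesis by (rule power2_le_imp_le) simp
qed

lemma unitary_entry_bound:
  assumes u: "unitary2 U" and ab: "a < 2" "b < 2"
  shows "cmod (U $$ (a,b)) \<le> 1"
proof -
  note e = unitary_entries[OF u]
  have r: "cmod (U$$(0,0)) \<le> 1" "cmod (U$$(0,1)) \<le> 1" "cmod (U$$(1,0)) \<le> 1" "cmod (U$$(1,1)) \<le> 1"
  proof -
    have e2: "U$$(0,1) * cnj (U$$(0,1)) + U$$(0,0) * cnj (U$$(0,0)) = 1" using e(2) by (simp only: add.commute)
    have e5: "U$$(1,1) * cnj (U$$(1,1)) + U$$(1,0) * cnj (U$$(1,0)) = 1" using e(5) by (simp only: add.commute)
    show "cmod (U$$(0,0)) \<le> 1" "cmod (U$$(0,1)) \<le> 1" "cmod (U$$(1,0)) \<le> 1" "cmod (U$$(1,1)) \<le> 1"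
      using norm_le1[OF e(2)] norm_le1[OF e2] norm_le1[OF e(5)] norm_le1[OF e5] by auto
  qed
  show ?thesis using ab r less_2_cases_iff by (metis One_nat_def)
qed


lemma cis3: "cis p * cis q * cis r = cis (p + q + r)" by (simp add: cis_mult)

lemma U_decomp:
  assumes u: "unitary2 U"
  shows "\<exists>ph x1 x2 t. U = m2 (cis ph) 0 0 (cis ph) * rz x1 * (Gf * rz t * Gdg) * rz x2"
proof -
  note e = unitary_entries[OF u]
  define a where "a = U$$(0,0)"
  define b where "b = U$$(0,1)"
  define c where "c = U$$(1,0)"
  define d where "d = U$$(1,1)"
  have U: "U = m2 a b c d" using e(1) unfolding a_def b_def c_def d_def .
  have h1: "a * cnj a + b * cnj b = 1" using e(2) unfolding a_def b_def .
  have h3: "c * cnj a + d * cnj b = 0" using e(4) unfolding a_def b_def c_def d_def .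
  have h4: "c * cnj c + d * cnj d = 1" using e(5) unfolding c_def d_def .
  define dl where "dl = a * d - b * c"
  have hd: "d = dl * cnj a"
  proof -
    have "d * (a * cnj a + b * cnj b) - b * (c * cnj a + d * cnj b) = dl * cnj a"
      unfolding dl_def by (simp add: algebra_simps)
    then show ?thesis using h1 h3 by simp
  qed
  have hc: "c = - (dl * cnj b)"
  proof -
    have "a * (c * cnj a + d * cnj b) - c * (a * cnj a + b * cnj b) = dl * cnj b"
      unfolding dl_def by (simp add: algebra_simps)
    then have "- c = dl * cnj b" using h1 h3 by (simp add: algebra_simps)
    then show ?thesis by (metis minus_minus)
  qed
  have "dl * cnj dl * (a * cnj a + b * cnj b) = c * cnj c + d * cnj d"
    unfolding hd hc by (simp add: algebra_simps)
  then have "dl * cnj dl = 1" using h1 h4 by simp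
  then have "complex_of_real ((cmod dl)^2) = 1" by (simp only: complex_norm_square)
  then have "(cmod dl)^2 = 1" by (metis of_real_eq_1_iff)
  then have ndl: "cmod dl = 1" using norm_ge_zero[of dl] by (simp add: power2_eq_1_iff)
  define al where "al = Arg a"
  define be where "be = Arg b"
  define ga where "ga = Arg dl"
  have ea: "a = complex_of_real (cmod a) * cis al" using rcis_cmod_Arg[of a] unfolding rcis_def al_def by simp
  have eb: "b = complex_of_real (cmod b) * cis be" using rcis_cmod_Arg[of b] unfolding rcis_def be_def by simp
  have edl: "dl = cis ga" using rcis_cmod_Arg[of dl] ndl unfolding rcis_def ga_def by simp
  have nab: "(cmod a)^2 + (cmod b)^2 = 1"
  proof -
    have "complex_of_real ((cmod a)^2 + (cmod b)^2) = 1" using h1 by (simp only: of_real_add complex_norm_square)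
    then show ?thesis by (metis of_real_eq_1_iff)
  qed
  have na: "cmod a \<le> 1" using norm_le1[OF h1] .
  define t where "t = arccos (cmod a)"
  have ct: "cos t = cmod a" unfolding t_def using na norm_ge_zero[of a] by (intro cos_arccos) linarith+
  have st: "sin t = cmod b"
  proof -
    have "sin t = sqrt (1 - (cmod a)^2)" unfolding t_def using na norm_ge_zero[of a] by (intro sin_arccos) linarith+
    also have "1 - (cmod a)^2 = (cmod b)^2" using nab by simp
    finally show ?thesis by simp
  qed
  define ph where "ph = ga / 2"
  define x1 where "x1 = ga - al - be"
  define x2 where "x2 = be - al"
  have "m2 (cis ph) 0 0 (cis ph) * rz x1 * (Gf * rz (-2*t) * Gdg) * rz x2 =
     m2 (cos t * (cis ph * cis (-(x1/2)) * cis (-(x2/2)))) (sin t * (cis ph * cis (-(x1/2)) * cis (x2/2)))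
        (- sin t * (cis ph * cis (x1/2) * cis (-(x2/2)))) (cos t * (cis ph * cis (x1/2) * cis (x2/2)))"
    unfolding R_eq by (simp add: rz_def m2_eq_iff algebra_simps)
  also have "\<dots> = m2 a b c d"
  proof -
    have a1: "cis ph * cis (-(x1/2)) * cis (-(x2/2)) = cis al"
      unfolding cis3 ph_def x1_def x2_def by (rule arg_cong[where f=cis]) (simp add: field_simps)
    have a2: "cis ph * cis (-(x1/2)) * cis (x2/2) = cis be"
      unfolding cis3 ph_def x1_def x2_def by (rule arg_cong[where f=cis]) (simp add: field_simps)
    have a3: "cis ph * cis (x1/2) * cis (-(x2/2)) = cis ga * cis (- be)"
      unfolding cis3 cis_mult ph_def x1_def x2_def by (rule arg_cong[where f=cis]) (simp add: field_simps)
    have a4: "cis ph * cis (x1/2) * cis (x2/2) = cis ga * cis (- al)"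
      unfolding cis3 cis_mult ph_def x1_def x2_def by (rule arg_cong[where f=cis]) (simp add: field_simps)
    have "c = - (cis ga * complex_of_real (cmod b) * cis (- be))"
      unfolding hc edl by (subst eb) (simp add: cis_cnj)
    moreover have "d = cis ga * complex_of_real (cmod a) * cis (- al)"
      unfolding hd edl by (subst ea) (simp add: cis_cnj)
    ultimately show ?thesis unfolding a1 a2 a3 a4 ct st m2_eq_iff using ea eb
      by (simp add: algebra_simps)
  qed
  finally have fin: "m2 (cis ph) 0 0 (cis ph) * rz x1 * (Gf * rz (-2*t) * Gdg) * rz x2 = m2 a b c d" .
  show ?thesis unfolding U using fin[symmetric] by blast
qed


lemma bit_lo_hi:
  assumes x: "(x::nat) < 2^m" and a: "a < 2"
  shows "bit (x + 2^m * a) k = (if k < m then bit x k else (k = m \<and> a = 1))"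
proof -
  have pa: "2^m * a = push_bit m a" by (simp add: push_bit_eq_mult)
  have ba: "bit a i = (i = 0 \<and> a = 1)" for i
  proof -
    have "a = 0 \<or> a = 1" using a by arith
    moreover have "bit (1::nat) i = (i = 0)"
    proof (cases i)
      case (Suc k)
      have "(1::nat) \<le> 2^k" by simp
      then have "(1::nat) < 2 * 2^k" by linarith
      then have "(1::nat) div (2 * 2^k) = 0" by (rule div_less)
      then show ?thesis using Suc by (simp add: bit_nat_def)
    qed (simp add: bit_nat_def)
    ultimately show ?thesis by auto
  qed
  have disj: "\<not> bit x i \<or> \<not> bit (push_bit m a) i" for i
    using lt_pow_bits[OF x, of i] by (auto simp: bit_push_bit_iff)
  have "bit (x + 2^m * a) k = (bit x k \<or> bit (push_bit m a) k)"
    unfolding pa by (rule bit_disjunctive_add_iff) (use disj in blast)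
  also have "\<dots> = (if k < m then bit x k else (k = m \<and> a = 1))"
    using lt_pow_bits[OF x, of k] by (auto simp: bit_push_bit_iff ba)
  finally show ?thesis .
qed

lemma lo_hi_lt: "(x::nat) < 2^m \<Longrightarrow> a < 2 \<Longrightarrow> x + 2^m * a < 2^(Suc m)"
proof -
  assume "x < 2^m" "a < 2"
  then have "a \<le> 1" by simp
  then have "2^m * a \<le> 2^m" by simp
  then have "x + 2^m * a < 2^m + 2^m" using \<open>x < 2^m\<close> by linarith
  then show ?thesis by simp
qed

lemma unset_lo_hi: "(x::nat) < 2^m \<Longrightarrow> a < 2 \<Longrightarrow> unset_bit m (x + 2^m * a) = x"
  by (rule bit_eq_iff[THEN iffD2]) (auto simp: bit_unset_bit_iff bit_lo_hi dest: lt_pow_bits)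

lemma bit_of_hi: "(x::nat) < 2^m \<Longrightarrow> a < 2 \<Longrightarrow> bit_of (x + 2^m * a) m = a"
  by (auto simp: bit_of_bit bit_lo_hi less_2_cases_iff)

lemma block_ctrl:
  assumes x: "x < 2^nc"
  shows "block nc (ctrl (Suc nc) nc F) x = mat 2 2 (\<lambda>(a,b). F x $$ (a, b))"
proof (rule eq_matI)
  fix a b assume ab: "a < dim_row (mat 2 2 (\<lambda>(a,b). F x $$ (a, b)))" "b < dim_col (mat 2 2 (\<lambda>(a,b). F x $$ (a, b)))"
  then have a: "a < 2" and b: "b < 2" by auto
  have i: "x + 2^nc * a < 2^Suc nc" "x + 2^nc * b < 2^Suc nc" using lo_hi_lt[OF x] a b by auto
  have ag: "\<forall>k<Suc nc. k \<noteq> nc \<longrightarrow> bit (x + 2^nc * a) k = bit (x + 2^nc * b) k"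
    using a b x by (auto simp: bit_lo_hi)
  show "block nc (ctrl (Suc nc) nc F) x $$ (a, b) = mat 2 2 (\<lambda>(a,b). F x $$ (a, b)) $$ (a, b)"
    using a b x i ag by (simp add: block_def ctrl_idx unset_lo_hi bit_of_hi)
qed (auto simp: block_def)

lemma offblock_ctrl:
  assumes x: "x < 2^nc" and y: "y < 2^nc" and yx: "y \<noteq> x" and a: "a < 2" and b: "b < 2"
  shows "ctrl (Suc nc) nc F $$ (y + 2^nc * a, x + 2^nc * b) = 0"
proof -
  have i: "y + 2^nc * a < 2^Suc nc" "x + 2^nc * b < 2^Suc nc" using lo_hi_lt x y a b by auto
  obtain k where k: "k < nc" "bit y k \<noteq> bit x k" using eq_bits[OF y x] yx by blast
  have "bit (y + 2^nc * a) k \<noteq> bit (x + 2^nc * b) k" using k x y a b by (simp add: bit_lo_hi)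
  moreover have "k < Suc nc" "k \<noteq> nc" using k(1) by auto
  ultimately have "\<not> (\<forall>k<Suc nc. k \<noteq> nc \<longrightarrow> bit (y + 2^nc * a) k = bit (x + 2^nc * b) k)"
    by blast
  then show ?thesis using ctrl_idx[OF i, of nc F] by (simp only: if_not_P if_False)
qed

lemma all_ones: "(x::nat) < 2^m \<Longrightarrow> (\<forall>l<m. bit x l) = (x = 2^m - 1)"
proof -
  assume x: "x < 2^m"
  have m: "(2::nat)^m - 1 < 2^m" by simp
  have bm: "bit ((2::nat)^m - 1) l = (l < m)" for l
  proof -
    have "bit (mask m :: nat) l = (l < m)" by (simp add: bit_mask_iff)
    then show ?thesis by (simp only: mask_eq_exp_minus_1)
  qed
  show ?thesis using eq_iff_bits[OF x m] bm by auto
qed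


lemma assoc2: "A \<in> carrier_mat 2 2 \<Longrightarrow> B \<in> carrier_mat 2 2 \<Longrightarrow> C \<in> carrier_mat 2 2 \<Longrightarrow> A * B * C = A * (B * C)"
  by (rule assoc_mult_mat) auto

lemma phs_indep: "k \<le> t \<Longrightarrow> phs k th M (unset_bit t j) = phs k th M j"
    "k \<le> t \<Longrightarrow> phs k th M (set_bit t j) = phs k th M j"
  by (auto simp: phs_def bit_unset_bit_iff bit_set_bit_iff)

lemma err_entry:
  assumes T: "T \<in> carrier_mat 2 2" and b: "\<forall>a<2. \<forall>b<2. cmod (T $$ (a,b)) \<le> 1" and r: "cmod (r - 1) \<le> e"
  shows "max_norm_le (mat 2 2 (\<lambda>(a,b). (m2 r 0 0 r * T) $$ (a,b))) T e"
  unfolding max_norm_le_def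
proof (intro allI impI)
  fix a b :: nat assume a: "a < 2" and bb: "b < 2"
  have "(m2 r 0 0 r * T) $$ (a,b) = r * T $$ (a,b)"
  proof -
    have "(m2 r 0 0 r * T) $$ (a,b) = m2 r 0 0 r $$ (a,0) * T $$ (0,b) + m2 r 0 0 r $$ (a,1) * T $$ (1,b)"
      by (rule mult2_idx[OF m2_carrier T a bb])
    then show ?thesis using a by (auto simp: less_2_cases_iff)
  qed
  then have "mat 2 2 (\<lambda>(a,b). (m2 r 0 0 r * T) $$ (a,b)) $$ (a,b) - T $$ (a,b) = (r - 1) * T $$ (a,b)"
    using a bb by (simp add: algebra_simps)
  then have "cmod (mat 2 2 (\<lambda>(a,b). (m2 r 0 0 r * T) $$ (a,b)) $$ (a,b) - T $$ (a,b)) = cmod (r - 1) * cmod (T $$ (a,b))"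
    by (simp add: norm_mult)
  also have "\<dots> \<le> cmod (r - 1) * 1" using b a bb by (intro mult_left_mono) auto
  also have "\<dots> \<le> e" using r by simp
  finally show "cmod (mat 2 2 (\<lambda>(a,b). (m2 r 0 0 r * T) $$ (a,b)) $$ (a,b) - T $$ (a,b)) \<le> e" .
qed

definition gsc :: "nat \<Rightarrow> real \<Rightarrow> real \<Rightarrow> real \<Rightarrow> real \<Rightarrow> nat \<Rightarrow> gate list" where
  "gsc nc ph x1 tt x2 M = mcrz [0..<nc] nc x2 @ [Single nc Gdg] @ mcrz [0..<nc] nc tt @ [Single nc Gf] @
      mcrz [0..<nc] nc x1 @ pht nc ph M"

lemma gsc_count: "cnot_count (gsc nc ph x1 tt x2 M) \<le> (144 + 48 * M) * nc"
proof -
  have m: "cnot_count (mcrz [0..<nc] nc th) \<le> 48 * nc" for th using mcrz_count[of "[0..<nc]" nc th] by simp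
  have s: "cnot_count [Single nc G] = 0" for G by (simp add: cnot_count_def is_CNOT_def)
  have p: "cnot_count (pht nc ph M) \<le> 48 * nc * M" by (rule pht_count)
  show ?thesis unfolding gsc_def cnot_count_append s using m[of x2] m[of tt] m[of x1] p
    by (simp add: algebra_simps)
qed

lemma gsc_wf: "circuit_wf (Suc nc) (gsc nc ph x1 tt x2 M)"
proof -
  have ok: "mcok (Suc nc) [0..<nc] nc" unfolding mcok_def by auto
  show ?thesis unfolding gsc_def circuit_wf_append
    using mcrz_wf[OF ok] pht_wf[of "Suc nc" nc] unitary_Gf by (simp add: circuit_wf_def)
qed


lemma gsc_mat:
  "circuit_mat (Suc nc) (gsc nc ph x1 tt x2 M) = ctrl (Suc nc) nc (\<lambda>j.
     m2 (phs nc ph M j) 0 0 (phs nc ph M j) * (if (\<forall>c\<in>set [0..<nc]. bit j c) then rz x1 else m2 1 0 0 1) * Gf *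
     (if (\<forall>c\<in>set [0..<nc]. bit j c) then rz tt else m2 1 0 0 1) * Gdg *
     (if (\<forall>c\<in>set [0..<nc]. bit j c) then rz x2 else m2 1 0 0 1))"
proof -
  have ok: "mcok (Suc nc) [0..<nc] nc" unfolding mcok_def by auto
  have m: "circuit_mat (Suc nc) (mcrz [0..<nc] nc th) = ctrl (Suc nc) nc (\<lambda>j. if (\<forall>c\<in>set [0..<nc]. bit j c) then rz th else m2 1 0 0 1)" for th
    by (rule mcrz_sem[OF ok])
  have s: "circuit_mat (Suc nc) [Single nc G] = ctrl (Suc nc) nc (\<lambda>_. G)" for G
    by (simp add: circuit_single gate_single)
  have p: "circuit_mat (Suc nc) (pht nc ph M) = ctrl (Suc nc) nc (\<lambda>j. m2 (phs nc ph M j) 0 0 (phs nc ph M j))"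
  proof -
    have "circuit_mat (Suc nc) (pht nc ph M) = diagm (Suc nc) (phs nc ph M)" by (rule pht_sem) auto
    also have "\<dots> = ctrl (Suc nc) nc (\<lambda>j. m2 (phs nc ph M (unset_bit nc j)) 0 0 (phs nc ph M (set_bit nc j)))"
      by (rule diag_ctrl) simp
    also have "\<dots> = ctrl (Suc nc) nc (\<lambda>j. m2 (phs nc ph M j) 0 0 (phs nc ph M j))"
      by (simp add: phs_indep)
    finally show ?thesis .
  qed
  show ?thesis unfolding gsc_def circuit_append m s p
    by (simp add: ctrl_mult)
qed

lemma construct:
  assumes u: "unitary2 U" and U: "U = m2 (cis ph) 0 0 (cis ph) * rz x1 * (Gf * rz tt * Gdg) * rz x2"
    and e: "\<bar>ph\<bar> / 2^M \<le> eps"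
  shows "approx_decomp nc U eps (gsc nc ph x1 tt x2 M)"
proof -
  define P where "P j = (\<forall>c\<in>set [0..<nc]. bit j c)" for j :: nat
  define Ft where "Ft j = m2 (phs nc ph M j) 0 0 (phs nc ph M j) * (if P j then rz x1 else m2 1 0 0 1) * Gf *
     (if P j then rz tt else m2 1 0 0 1) * Gdg * (if P j then rz x2 else m2 1 0 0 1)" for j
  have W: "circuit_mat (nc + 1) (gsc nc ph x1 tt x2 M) = ctrl (Suc nc) nc Ft"
    using gsc_mat unfolding Ft_def P_def by simp
  have off: "\<forall>x<2 ^ nc. \<forall>y<2 ^ nc. \<forall>a<2. \<forall>b<2. y \<noteq> x \<longrightarrow>
      ctrl (Suc nc) nc Ft $$ (y + 2 ^ nc * a, x + 2 ^ nc * b) = 0"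
    using offblock_ctrl by blast
  have blk: "max_norm_le (block nc (ctrl (Suc nc) nc Ft) x) (if x = 2 ^ nc - 1 then U else 1\<^sub>m 2) eps"
    if x: "x < 2^nc" for x
  proof -
    obtain r where r: "phs nc ph M x = (if \<forall>l<nc. bit x l then cis ph else 1) * r"
      "cmod (r - 1) \<le> \<bar>ph\<bar> / 2^M" using phs_err by blast
    have re: "cmod (r - 1) \<le> eps" using r(2) e by simp
    have Px: "P x = (\<forall>l<nc. bit x l)" unfolding P_def by auto
    have bl: "block nc (ctrl (Suc nc) nc Ft) x = mat 2 2 (\<lambda>(a,b). Ft x $$ (a,b))" by (rule block_ctrl[OF x])
    show ?thesis
    proof (cases "P x")
      case True
      then have xe: "x = 2^nc - 1" using all_ones[OF x] Px by simp
      have mm: "m2 r 0 0 r * (m2 (cis ph) 0 0 (cis ph) * X) = m2 (r * cis ph) 0 0 (r * cis ph) * X"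
        if "X \<in> carrier_mat 2 2" for X
        using that by (simp add: assoc2[symmetric])
      have "Ft x = m2 r 0 0 r * U"
        unfolding Ft_def U using True r(1) Px
        by (simp add: assoc2 algebra_simps mm)
      moreover have "\<forall>a<2. \<forall>b<2. cmod (U $$ (a,b)) \<le> 1" using unitary_entry_bound[OF u] by blast
      moreover have "U \<in> carrier_mat 2 2" using u unfolding unitary2_def by simp
      ultimately show ?thesis unfolding bl using xe re err_entry by simp
    next
      case False
      then have xe: "x \<noteq> 2^nc - 1" using all_ones[OF x] Px by simp
      have g: "Gf * Gdg = m2 1 0 0 1" by (simp add: Gf_def Gdg_def hh_sq algebra_simps m2_eq_iff)
      have nP: "\<not>(\<forall>l<nc. bit x l)" using False Px by simp
      have ph: "phs nc ph M x = r" using r(1) nP by simp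
      have "Ft x = m2 r 0 0 r * m2 1 0 0 1"
        unfolding Ft_def ph using False by (simp add: assoc2 g)
      moreover have "\<forall>a<2. \<forall>b<2. cmod (m2 1 0 0 1 $$ (a,b)) \<le> 1"
        by (auto simp: less_2_cases_iff)
      ultimately show ?thesis unfolding bl one2 using xe re err_entry[of "m2 1 0 0 1"] by simp
    qed
  qed
  show ?thesis unfolding approx_decomp_def Let_def W
    using gsc_wf off blk by simp
qed


theorem corollary1:
  fixes U :: "complex mat" and \<epsilon> :: real
  assumes "unitary2 U" and "\<epsilon> > 0"
  shows "\<exists>C::real. \<forall>nc::nat. \<exists>gs. approx_decomp nc U \<epsilon> gs \<and>
           real (cnot_count gs) \<le> C * real (nc + 1)"
proof -
  obtain ph x1 tt x2 where U: "U = m2 (cis ph) 0 0 (cis ph) * rz x1 * (Gf * rz tt * Gdg) * rz x2"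
    using U_decomp[OF assms(1)] by blast
  obtain M :: nat where M: "\<bar>ph\<bar> / \<epsilon> < 2^M" using real_arch_pow[of 2 "\<bar>ph\<bar> / \<epsilon>"] by auto
  have e: "\<bar>ph\<bar> / 2^M \<le> \<epsilon>"
  proof -
    have "\<bar>ph\<bar> < \<epsilon> * 2^M" using M assms(2) by (simp add: divide_less_eq mult.commute)
    then show ?thesis by (simp add: divide_le_eq mult.commute)
  qed
  show ?thesis
  proof (intro exI[of _ "real (144 + 48 * M)"] allI)
    fix nc :: nat
    have a: "approx_decomp nc U \<epsilon> (gsc nc ph x1 tt x2 M)" by (rule construct[OF assms(1) U e])
    have "real (cnot_count (gsc nc ph x1 tt x2 M)) \<le> real ((144 + 48 * M) * nc)"
      using gsc_count[of nc ph x1 tt x2 M] by linarith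
    also have "\<dots> \<le> real (144 + 48 * M) * real (nc + 1)" by simp
    finally show "\<exists>gs. approx_decomp nc U \<epsilon> gs \<and> real (cnot_count gs) \<le> real (144 + 48 * M) * real (nc + 1)"
      using a by blast
  qed
qed


end
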